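(* $\mathtt{RealTime_{IA}} = \mathtt{pred}$-$\mathtt{dio}$-$\mathtt{ESO}$-$\mathtt{HORN}$. That is, a language $L\subseteq\Sigma^+$ is accepted in real time by an iterative array (sequential input, neighborhood $\{-1,0,1\}$, first cell as output cell) if and only if $L=\{w\in\Sigma^+:\langle w\rangle\models\Phi\}$ for some predecessor Horn formula with diagonal input-output $\Phi$.
   Context: Fix a finite alphabet $\Sigma$. A nonempty word $w=w_1\cdots w_n\in\Sigma^n$ is represented by the structure $\langle w\rangle=([1,n];(Q_s)_{s\in\Sigma},\mathtt{min},\mathtt{max},\mathtt{suc},\mathtt{pred})$ with domain $[1,n]$, where $Q_s(i)\iff w_i=s$, $\mathtt{min}(i)\iff i=1$, $\mathtt{max}(i)\iff i=n$, $\mathtt{suc}(i)=i+1$ for $i<n$, $\mathtt{suc}(n)=n$, $\mathtt{pred}(i)=i-1$ for $i>1$, $\mathtt{pred}(1)=1$. Write $x-k$ for $\mathtt{pred}^k(x)$. A predecessor Horn formula with diagonal input-output is a formula $\Phi=\exists\mathbf{R}\forall x\forall y\,\psi(x,y)$, $\mathbf{R}$ a finite set of binary relation symbols (computation predicates), $\psi$ a conjunction of Horn clauses in $x,y$ over the signature $\{(Q_s)_{s\in\Sigma},\mathtt{min},\mathtt{max},\mathtt{suc},\mathtt{pred},=\}\cup\mathbf{R}$, each of the form $\delta_1\wedge\cdots\wedge\delta_r\to\delta_0$ with $\delta_0$ an atom $R(x,y)$ ($R\in\mathbf{R}$) or $\bot$, and each hypothesis $\delta_i$ one of: a conjunction $Q_s(x-a)\wedge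 x=y$ ($s\in\Sigma$, integer $a\ge0$); $U(x-a)$, $\neg U(x-a)$, $U(y-a)$, $\neg U(y-a)$ ($U\in\{\mathtt{min},\mathtt{max}\}$, $a\ge0$); $S(x-a,y-b)$ or $S(y-b,x-a)$ ($S\in\mathbf{R}$, $a,b\ge0$). The formula defines $\{w\in\Sigma^+:\langle w\rangle\models\Phi\}$; $\mathtt{pred}$-$\mathtt{dio}$-$\mathtt{ESO}$-$\mathtt{HORN}$ denotes the class of languages so defined. An iterative array is a cellular automaton $(Q,\Sigma,Q_{accept},\mathcal N,\delta)$ (finite $Q\supseteq\Sigma$, $Q_{accept}\subseteq Q$, neighborhood $\mathcal N=\{-1,0,1\}$, $\delta:Q^{3}\to Q$) together with an input transition function $\delta_{input}$, working on cells $1,\dots,n$ for an input $w=w_1\cdots w_n$; cells outside $[1,n]$ are permanently in a state $\sharp$, cells not yet reached by information from the input are in a quiescent state $\lambda$. The input is sequential: the letter $w_i$ is given to cell $1$ at time $i$, i.e. for $t\le n$ the state of cell 1 at time $t$ is computed by $\delta_{input}$ from $w_t$ and the neighbourhood states at time $t-1$, while all other updates are $\langle c,t\rangle=\delta(\langle c+v,t-1\rangle:v\in\mathcal N)$. $\mathtt{RealTime_{IA}}$ is the class of languages $L\subseteq\Sigma^+$ for which such an array exists with $w\in L\iff\langle 1,n\rangle\in Q_{accept}$ for every $w$ of length $n$. *)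

theory Defs
  imports Main
begin

text \<open>A word w = w_1 ... w_n over a finite alphabet 'a is a list with w_i = w ! (i - 1).
  Positions are the naturals 1..n.\<close>

definition pred_pos :: "nat \<Rightarrow> nat" where
  "pred_pos i = (if 1 < i then i - 1 else i)"

text \<open>x - k abbreviates pred^k(x).\<close>
definition minus_pred :: "nat \<Rightarrow> nat \<Rightarrow> nat" where
  "minus_pred x k = (pred_pos ^^ k) x"

datatype var = VarX | VarY

datatype unary_pred = UMin | UMax

text \<open>Computation predicates are named by natural numbers; a formula only uses finitely many.\<close>
datatype 'a hyp =
    HInput 'a nat
  | HUnary unary_pred var nat bool
  | HRel nat nat nat
  | HRelRev nat nat nat            (* S(y - b, x - a), arguments: S, b, a *)

datatype concl = CRel nat | CBot

type_synonym 'a horn_clause = "'a hyp list \<times> concl"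

type_synonym 'a horn_formula = "'a horn_clause list"

definition var_val :: "var \<Rightarrow> nat \<Rightarrow> nat \<Rightarrow> nat" where
  "var_val v x y = (case v of VarX \<Rightarrow> x | VarY \<Rightarrow> y)"

definition unary_sem :: "unary_pred \<Rightarrow> nat \<Rightarrow> nat \<Rightarrow> bool" where
  "unary_sem U n i = (case U of UMin \<Rightarrow> i = 1 | UMax \<Rightarrow> i = n)"

fun hyp_sem :: "'a list \<Rightarrow> (nat \<Rightarrow> nat \<Rightarrow> nat \<Rightarrow> bool) \<Rightarrow> nat \<Rightarrow> nat \<Rightarrow> 'a hyp \<Rightarrow> bool" where
  "hyp_sem w \<rho> x y (HInput s a) = (w ! (minus_pred x a - 1) = s \<and> x = y)"
| "hyp_sem w \<rho> x y (HUnary U v a pos) =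
     (if pos then unary_sem U (length w) (minus_pred (var_val v x y) a)
      else \<not> unary_sem U (length w) (minus_pred (var_val v x y) a))"
| "hyp_sem w \<rho> x y (HRel S a b) = \<rho> S (minus_pred x a) (minus_pred y b)"
| "hyp_sem w \<rho> x y (HRelRev S b a) = \<rho> S (minus_pred y b) (minus_pred x a)"

fun concl_sem :: "(nat \<Rightarrow> nat \<Rightarrow> nat \<Rightarrow> bool) \<Rightarrow> nat \<Rightarrow> nat \<Rightarrow> concl \<Rightarrow> bool" where
  "concl_sem \<rho> x y (CRel R) = \<rho> R x y"
| "concl_sem \<rho> x y CBot = False"

definition clause_sem :: "'a list \<Rightarrow> (nat \<Rightarrow> nat \<Rightarrow> nat \<Rightarrow> bool) \<Rightarrow> nat \<Rightarrow> nat \<Rightarrow> 'a horn_clause \<Rightarrow> bool" where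
  "clause_sem w \<rho> x y C =
     ((\<forall>h\<in>set (fst C). hyp_sem w \<rho> x y h) \<longrightarrow> concl_sem \<rho> x y (snd C))"

text \<open>Values of \<rho> outside [1,n] are never consulted since pred keeps [1,n] invariant.\<close>
definition horn_models :: "'a list \<Rightarrow> 'a horn_formula \<Rightarrow> bool" where
  "horn_models w \<Phi> =
     (\<exists>\<rho> :: nat \<Rightarrow> nat \<Rightarrow> nat \<Rightarrow> bool.
        \<forall>x \<in> {1..length w}. \<forall>y \<in> {1..length w}. \<forall>C \<in> set \<Phi>. clause_sem w \<rho> x y C)"

definition pred_dio_ESO_HORN :: "'a list set set" where
  "pred_dio_ESO_HORN = {L. \<exists>\<Phi> :: 'a horn_formula. L = {w. w \<noteq> [] \<and> horn_models w \<Phi>}}"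

text \<open>States are coded as natural numbers; Qs is the finite state set, qsharp the permanent
  border state of cells outside [1,n], qlam the quiescent state.\<close>
record 'a iarray =
  Qs :: "nat set"
  Qacc :: "nat set"
  qlam :: nat
  qsharp :: nat
  dlt :: "nat \<Rightarrow> nat \<Rightarrow> nat \<Rightarrow> nat"
  dlt_in :: "'a \<Rightarrow> nat \<Rightarrow> nat \<Rightarrow> nat \<Rightarrow> nat"

definition ia_wf :: "'a iarray \<Rightarrow> bool" where
  "ia_wf A \<longleftrightarrow>
     finite (Qs A) \<and> Qacc A \<subseteq> Qs A \<and> qlam A \<in> Qs A \<and> qsharp A \<notin> Qs A \<and>
     (\<forall>p q r. p \<in> insert (qsharp A) (Qs A) \<longrightarrow> q \<in> Qs A \<longrightarrow> r \<in> insert (qsharp A) (Qs A)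
        \<longrightarrow> dlt A p q r \<in> Qs A) \<and>
     (\<forall>s p q r. p \<in> insert (qsharp A) (Qs A) \<longrightarrow> q \<in> Qs A \<longrightarrow> r \<in> insert (qsharp A) (Qs A)
        \<longrightarrow> dlt_in A s p q r \<in> Qs A) \<and>
     dlt A (qlam A) (qlam A) (qlam A) = qlam A \<and>
     dlt A (qlam A) (qlam A) (qsharp A) = qlam A"

text \<open>For t+1 \<le> n cell 1 reads letter w_(t+1) = w ! t via dlt_in.\<close>
fun cfg :: "'a iarray \<Rightarrow> 'a list \<Rightarrow> nat \<Rightarrow> nat \<Rightarrow> nat" where
  "cfg A w 0 c = (if 1 \<le> c \<and> c \<le> length w then qlam A else qsharp A)"
| "cfg A w (Suc t) c =
     (if c < 1 \<or> length w < c then qsharp A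
      else if c = 1 \<and> Suc t \<le> length w
        then dlt_in A (w ! t) (cfg A w t 0) (cfg A w t 1) (cfg A w t 2)
      else dlt A (cfg A w t (c - 1)) (cfg A w t c) (cfg A w t (c + 1)))"

definition ia_accepts_rt :: "'a iarray \<Rightarrow> 'a list \<Rightarrow> bool" where
  "ia_accepts_rt A w \<longleftrightarrow> cfg A w (length w) 1 \<in> Qacc A"

definition RealTime_IA :: "'a list set set" where
  "RealTime_IA = {L. [] \<notin> L \<and>
     (\<exists>A :: 'a iarray. ia_wf A \<and> (\<forall>w. w \<noteq> [] \<longrightarrow> (w \<in> L \<longleftrightarrow> ia_accepts_rt A w)))}"

end

theory Submission
  imports Defs "HOL-Library.Countable_Set"
begin


lemma mp_eq: "minus_pred x k = (if x = 0 then 0 else max 1 (x - k))"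
proof (induction k)
  case 0 then show ?case by (simp add: minus_pred_def)
next
  case (Suc k) then show ?case by (simp add: minus_pred_def pred_pos_def)
qed

datatype ver = VN | VX
datatype fct = FR nat nat nat | FB nat nat
type_synonym vfact = "ver \<times> fct"

fun pt :: "fct \<Rightarrow> nat \<times> nat" where
  "pt (FR S p q) = (p, q)" | "pt (FB p q) = (p, q)"

definition vsel :: "ver \<Rightarrow> nat \<Rightarrow> nat \<Rightarrow> nat \<Rightarrow> nat \<Rightarrow> ver" where
  "vsel v X Y X' Y' = (if v = VX \<and> max X' Y' = max X Y then VX else VN)"

definition cunary :: "ver \<Rightarrow> unary_pred \<Rightarrow> nat \<Rightarrow> nat \<Rightarrow> nat \<Rightarrow> bool" where
  "cunary v U X Y k = (case U of UMin \<Rightarrow> k = 1 | UMax \<Rightarrow> v = VX \<and> k = max X Y)"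

fun chyp :: "(nat \<Rightarrow> 'a) \<Rightarrow> ver \<Rightarrow> nat \<Rightarrow> nat \<Rightarrow> vfact set \<Rightarrow> 'a hyp \<Rightarrow> bool" where
  "chyp lt v X Y M (HInput s a) = (lt (minus_pred X a) = s \<and> X = Y)"
| "chyp lt v X Y M (HUnary U var a pos) = (pos = cunary v U X Y (minus_pred (var_val var X Y) a))"
| "chyp lt v X Y M (HRel S a b) =
     ((vsel v X Y (minus_pred X a) (minus_pred Y b), FR S (minus_pred X a) (minus_pred Y b)) \<in> M)"
| "chyp lt v X Y M (HRelRev S b a) =
     ((vsel v X Y (minus_pred Y b) (minus_pred X a), FR S (minus_pred Y b) (minus_pred X a)) \<in> M)"

fun hfact :: "ver \<Rightarrow> nat \<Rightarrow> nat \<Rightarrow> 'a hyp \<Rightarrow> vfact option" where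
  "hfact v X Y (HRel S a b) =
     Some (vsel v X Y (minus_pred X a) (minus_pred Y b), FR S (minus_pred X a) (minus_pred Y b))"
| "hfact v X Y (HRelRev S b a) =
     Some (vsel v X Y (minus_pred Y b) (minus_pred X a), FR S (minus_pred Y b) (minus_pred X a))"
| "hfact v X Y _ = None"

lemma chyp_mono: "chyp lt v X Y M h \<Longrightarrow> M \<subseteq> M' \<Longrightarrow> chyp lt v X Y M' h"
  by (cases h) auto

lemma chyp_restrict:
  assumes "\<And>f. hfact v X Y h = Some f \<Longrightarrow> f \<in> S"
  shows "chyp lt v X Y (M \<inter> S) h = chyp lt v X Y M h"
  using assms by (cases h) auto

fun cfact :: "concl \<Rightarrow> nat \<Rightarrow> nat \<Rightarrow> fct" where
  "cfact (CRel R) X Y = FR R X Y" | "cfact CBot X Y = FB X Y"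

lemma pt_cfact[simp]: "pt (cfact c X Y) = (X, Y)"
  by (cases c) auto

definition closedM :: "'a horn_formula \<Rightarrow> (nat \<Rightarrow> 'a) \<Rightarrow> vfact set \<Rightarrow> bool" where
  "closedM F lt M = (\<forall>C\<in>set F. \<forall>v X Y. 1 \<le> X \<longrightarrow> 1 \<le> Y \<longrightarrow>
      (\<forall>h\<in>set (fst C). chyp lt v X Y M h) \<longrightarrow> (v, cfact (snd C) X Y) \<in> M)"

definition LMC :: "'a horn_formula \<Rightarrow> (nat \<Rightarrow> 'a) \<Rightarrow> vfact set" where
  "LMC F lt = \<Inter>{M. closedM F lt M}"

lemma LMC_least: "closedM F lt M \<Longrightarrow> LMC F lt \<subseteq> M"
  unfolding LMC_def by blast

lemma LMC_closed: "closedM F lt (LMC F lt)"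
  unfolding closedM_def
proof (intro ballI allI impI)
  fix C v X Y
  assume C: "C \<in> set F" and XY: "1 \<le> X" "1 \<le> Y"
    and H: "\<forall>h\<in>set (fst C). chyp lt v X Y (LMC F lt) h"
  show "(v, cfact (snd C) X Y) \<in> LMC F lt"
    unfolding LMC_def
  proof
    fix M assume "M \<in> {M. closedM F lt M}"
    then have cM: "closedM F lt M" by simp
    have "LMC F lt \<subseteq> M" using LMC_least[OF cM] .
    then have "\<forall>h\<in>set (fst C). chyp lt v X Y M h" using H chyp_mono by blast
    then show "(v, cfact (snd C) X Y) \<in> M" using cM C XY unfolding closedM_def by blast
  qed
qed

lemma LMC_rule:
  "C \<in> set F \<Longrightarrow> 1 \<le> X \<Longrightarrow> 1 \<le> Y \<Longrightarrow> (\<forall>h\<in>set (fst C). chyp lt v X Y (LMC F lt) h)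
   \<Longrightarrow> (v, cfact (snd C) X Y) \<in> LMC F lt"
  using LMC_closed unfolding closedM_def by blast

definition posf :: "vfact \<Rightarrow> bool" where
  "posf f = (1 \<le> fst (pt (snd f)) \<and> 1 \<le> snd (pt (snd f)))"

lemma LMC_pos: "f \<in> LMC F lt \<Longrightarrow> posf f"
proof -
  have "closedM F lt {f. posf f}"
    unfolding closedM_def posf_def by auto
  then show "f \<in> LMC F lt \<Longrightarrow> posf f" using LMC_least by blast
qed

definition view :: "nat \<Rightarrow> nat \<Rightarrow> nat \<Rightarrow> ver" where
  "view n p q = (if max p q = n then VX else VN)"

definition ltw :: "'a list \<Rightarrow> nat \<Rightarrow> 'a" where
  "ltw w k = w ! (k - 1)"

lemma mp_le: "minus_pred x a \<le> x"
  by (simp add: mp_eq)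

lemma mp_pos: "1 \<le> x \<Longrightarrow> 1 \<le> minus_pred x a"
  by (simp add: mp_eq)

lemma horn_models_iff:
  "horn_models w F \<longleftrightarrow>
     \<not> (\<exists>p q. 1 \<le> p \<and> p \<le> length w \<and> 1 \<le> q \<and> q \<le> length w \<and>
          (view (length w) p q, FB p q) \<in> LMC F (ltw w))"
proof
  let ?n = "length w"
  assume "horn_models w F"
  then obtain \<rho> where \<rho>: "\<forall>x\<in>{1..?n}. \<forall>y\<in>{1..?n}. \<forall>C\<in>set F. clause_sem w \<rho> x y C"
    unfolding horn_models_def by blast
  define inview where "inview v p q \<longleftrightarrow> 1 \<le> p \<and> 1 \<le> q \<and>
      (if v = VX then max p q = ?n else max p q < ?n)" for v p q
  define M where "M = {(v, FR S p q) | v S p q. \<not> inview v p q \<or> \<rho> S p q}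
     \<union> {(v, FB p q) | v p q. \<not> inview v p q}"
  have cl: "closedM F (ltw w) M"
    unfolding closedM_def
  proof (intro ballI allI impI)
    fix C v X Y
    assume C: "C \<in> set F" and XY: "1 \<le> X" "1 \<le> Y"
      and H: "\<forall>h\<in>set (fst C). chyp (ltw w) v X Y M h"
    show "(v, cfact (snd C) X Y) \<in> M"
    proof (cases "inview v X Y")
      case False
      then show ?thesis unfolding M_def by (cases "snd C") auto
    next
      case True
      then have Xn: "X \<le> ?n" "Y \<le> ?n" unfolding inview_def by (auto split: if_splits)
      have hs: "hyp_sem w \<rho> X Y h" if h: "h \<in> set (fst C)" for h
      proof -
        have ch: "chyp (ltw w) v X Y M h" using H h by blast
        show ?thesis
        proof (cases h)
          case (HInput s a)
          then show ?thesis using ch by (auto simp: ltw_def)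
        next
          case (HUnary U var a pos)
          have le: "minus_pred (var_val var X Y) a \<le> max X Y"
            using mp_le[of "var_val var X Y" a] by (cases var) (auto simp: var_val_def)
          have "cunary v U X Y (minus_pred (var_val var X Y) a) =
                unary_sem U ?n (minus_pred (var_val var X Y) a)"
            using True le unfolding cunary_def unary_sem_def inview_def
            by (cases U; cases v) auto
          then show ?thesis using ch HUnary by simp
        next
          case (HRel S a b)
          let ?X' = "minus_pred X a" and ?Y' = "minus_pred Y b"
          have le: "?X' \<le> X" "?Y' \<le> Y" "1 \<le> ?X'" "1 \<le> ?Y'" using mp_le mp_pos XY by auto
          have iv: "inview (vsel v X Y ?X' ?Y') ?X' ?Y'"
            using True le unfolding inview_def vsel_def by (cases v) auto
          then show ?thesis using ch HRel unfolding M_def by auto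
        next
          case (HRelRev S b a)
          let ?X' = "minus_pred X a" and ?Y' = "minus_pred Y b"
          have le: "?X' \<le> X" "?Y' \<le> Y" "1 \<le> ?X'" "1 \<le> ?Y'" using mp_le mp_pos XY by auto
          have iv: "inview (vsel v X Y ?Y' ?X') ?Y' ?X'"
            using True le unfolding inview_def vsel_def by (cases v) auto
          then show ?thesis using ch HRelRev unfolding M_def by auto
        qed
      qed
      have cs: "clause_sem w \<rho> X Y C" using \<rho> XY Xn C by auto
      then have "concl_sem \<rho> X Y (snd C)" using hs unfolding clause_sem_def by blast
      then show ?thesis unfolding M_def by (cases "snd C") auto
    qed
  qed
  show "\<not> (\<exists>p q. 1 \<le> p \<and> p \<le> ?n \<and> 1 \<le> q \<and> q \<le> ?n \<and> (view ?n p q, FB p q) \<in> LMC F (ltw w))"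
  proof
    assume "\<exists>p q. 1 \<le> p \<and> p \<le> ?n \<and> 1 \<le> q \<and> q \<le> ?n \<and> (view ?n p q, FB p q) \<in> LMC F (ltw w)"
    then obtain p q where pq: "1 \<le> p" "p \<le> ?n" "1 \<le> q" "q \<le> ?n" "(view ?n p q, FB p q) \<in> LMC F (ltw w)"
      by blast
    then have "(view ?n p q, FB p q) \<in> M" using LMC_least[OF cl] by blast
    moreover have "inview (view ?n p q) p q" using pq unfolding inview_def view_def by auto
    ultimately show False unfolding M_def by auto
  qed
next
  let ?n = "length w"
  assume nb: "\<not> (\<exists>p q. 1 \<le> p \<and> p \<le> ?n \<and> 1 \<le> q \<and> q \<le> ?n \<and> (view ?n p q, FB p q) \<in> LMC F (ltw w))"
  define \<rho> where "\<rho> S p q \<longleftrightarrow> (view ?n p q, FR S p q) \<in> LMC F (ltw w)" for S p q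
  have "\<forall>x\<in>{1..?n}. \<forall>y\<in>{1..?n}. \<forall>C\<in>set F. clause_sem w \<rho> x y C"
  proof (intro ballI)
    fix X Y C assume X: "X \<in> {1..?n}" and Y: "Y \<in> {1..?n}" and C: "C \<in> set F"
    show "clause_sem w \<rho> X Y C"
      unfolding clause_sem_def
    proof
      assume hs: "\<forall>h\<in>set (fst C). hyp_sem w \<rho> X Y h"
      have ch: "chyp (ltw w) (view ?n X Y) X Y (LMC F (ltw w)) h" if h: "h \<in> set (fst C)" for h
      proof -
        have hh: "hyp_sem w \<rho> X Y h" using hs h by blast
        show ?thesis
        proof (cases h)
          case (HInput s a)
          then show ?thesis using hh by (auto simp: ltw_def)
        next
          case (HUnary U var a pos)
          have le: "minus_pred (var_val var X Y) a \<le> max X Y"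
            using mp_le[of "var_val var X Y" a] by (cases var) (auto simp: var_val_def)
          have "max X Y \<le> ?n" using X Y by auto
          then have "cunary (view ?n X Y) U X Y (minus_pred (var_val var X Y) a) =
                unary_sem U ?n (minus_pred (var_val var X Y) a)"
            using le unfolding cunary_def unary_sem_def view_def
            by (cases U) auto
          then show ?thesis using hh HUnary by (cases pos) auto
        next
          case (HRel S a b)
          let ?X' = "minus_pred X a" and ?Y' = "minus_pred Y b"
          have le: "?X' \<le> X" "?Y' \<le> Y" using mp_le by auto
          have "max X Y \<le> ?n" using X Y by auto
          then have "vsel (view ?n X Y) X Y ?X' ?Y' = view ?n ?X' ?Y'"
            using le unfolding vsel_def view_def by auto
          then show ?thesis using hh HRel unfolding \<rho>_def by simp
        next
          case (HRelRev S b a)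
          let ?X' = "minus_pred X a" and ?Y' = "minus_pred Y b"
          have le: "?X' \<le> X" "?Y' \<le> Y" using mp_le by auto
          have "max X Y \<le> ?n" using X Y by auto
          then have "vsel (view ?n X Y) X Y ?Y' ?X' = view ?n ?Y' ?X'"
            using le unfolding vsel_def view_def by auto
          then show ?thesis using hh HRelRev unfolding \<rho>_def by simp
        qed
      qed
      have r: "(view ?n X Y, cfact (snd C) X Y) \<in> LMC F (ltw w)"
        using LMC_rule[OF C, of X Y] X Y ch by auto
      show "concl_sem \<rho> X Y (snd C)"
      proof (cases "snd C")
        case (CRel R) then show ?thesis using r by (simp add: \<rho>_def)
      next
        case CBot then show ?thesis using r nb X Y by auto
      qed
    qed
  qed
  then show "horn_models w F" unfolding horn_models_def by blast
qed


definition factsAt :: "(nat \<times> nat) set \<Rightarrow> vfact set" where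
  "factsAt P = {f. pt (snd f) \<in> P}"

definition closedAt :: "'a horn_formula \<Rightarrow> (nat \<Rightarrow> 'a) \<Rightarrow> (nat \<times> nat) set \<Rightarrow> vfact set \<Rightarrow> vfact set \<Rightarrow> bool" where
  "closedAt F lt P E Z = (\<forall>C\<in>set F. \<forall>v X Y. (X, Y) \<in> P \<longrightarrow> 1 \<le> X \<longrightarrow> 1 \<le> Y \<longrightarrow>
      (\<forall>h\<in>set (fst C). chyp lt v X Y (Z \<union> E) h) \<longrightarrow> (v, cfact (snd C) X Y) \<in> Z)"

definition cl :: "'a horn_formula \<Rightarrow> (nat \<Rightarrow> 'a) \<Rightarrow> (nat \<times> nat) set \<Rightarrow> vfact set \<Rightarrow> vfact set" where
  "cl F lt P E = \<Inter>{Z. Z \<subseteq> factsAt P \<and> closedAt F lt P E Z}"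

lemma factsAt_closed: "closedAt F lt P E (factsAt P)"
  unfolding closedAt_def factsAt_def by auto

lemma cl_sub: "cl F lt P E \<subseteq> factsAt P"
  unfolding cl_def using factsAt_closed by blast

lemma cl_least: "Z \<subseteq> factsAt P \<Longrightarrow> closedAt F lt P E Z \<Longrightarrow> cl F lt P E \<subseteq> Z"
  unfolding cl_def by blast

lemma cl_closed: "closedAt F lt P E (cl F lt P E)"
  unfolding closedAt_def
proof (intro ballI allI impI)
  fix C v X Y
  assume C: "C \<in> set F" and P: "(X, Y) \<in> P" and XY: "1 \<le> X" "1 \<le> Y"
    and H: "\<forall>h\<in>set (fst C). chyp lt v X Y (cl F lt P E \<union> E) h"
  show "(v, cfact (snd C) X Y) \<in> cl F lt P E"
    unfolding cl_def
  proof
    fix Z assume "Z \<in> {Z. Z \<subseteq> factsAt P \<and> closedAt F lt P E Z}"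
    then have Z: "Z \<subseteq> factsAt P" "closedAt F lt P E Z" by auto
    have "cl F lt P E \<subseteq> Z" using cl_least[OF Z] .
    then have "\<forall>h\<in>set (fst C). chyp lt v X Y (Z \<union> E) h"
      using H chyp_mono[of lt v X Y _ _ "Z \<union> E"] by blast
    then show "(v, cfact (snd C) X Y) \<in> Z" using Z(2) C P XY unfolding closedAt_def by blast
  qed
qed

lemma closure_LMC:
  assumes loc: "\<And>C h v X Y f. C \<in> set F \<Longrightarrow> h \<in> set (fst C) \<Longrightarrow> (X, Y) \<in> P \<Longrightarrow> 1 \<le> X \<Longrightarrow> 1 \<le> Y
      \<Longrightarrow> hfact v X Y h = Some f \<Longrightarrow> f \<in> factsAt P \<union> U"
  shows "LMC F lt \<inter> factsAt P = cl F lt P (LMC F lt \<inter> U)"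
proof
  let ?L = "LMC F lt" and ?E = "LMC F lt \<inter> U"
  have c1: "closedAt F lt P ?E (?L \<inter> factsAt P)"
    unfolding closedAt_def
  proof (intro ballI allI impI)
    fix C v X Y
    assume C: "C \<in> set F" and P: "(X, Y) \<in> P" and XY: "1 \<le> X" "1 \<le> Y"
      and H: "\<forall>h\<in>set (fst C). chyp lt v X Y (?L \<inter> factsAt P \<union> ?E) h"
    have "\<forall>h\<in>set (fst C). chyp lt v X Y ?L h"
      using H chyp_mono[of lt v X Y _ _ ?L] by blast
    then have "(v, cfact (snd C) X Y) \<in> ?L" using LMC_rule[OF C XY] by blast
    then show "(v, cfact (snd C) X Y) \<in> ?L \<inter> factsAt P" using P by (simp add: factsAt_def)
  qed
  then show "cl F lt P ?E \<subseteq> ?L \<inter> factsAt P" using cl_least by blast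
  define M' where "M' = (?L - factsAt P) \<union> cl F lt P ?E"
  have M'L: "M' \<subseteq> ?L" using cl_least[OF _ c1] unfolding M'_def by blast
  have "closedM F lt M'"
    unfolding closedM_def
  proof (intro ballI allI impI)
    fix C v X Y
    assume C: "C \<in> set F" and XY: "1 \<le> X" "1 \<le> Y"
      and H: "\<forall>h\<in>set (fst C). chyp lt v X Y M' h"
    have "\<forall>h\<in>set (fst C). chyp lt v X Y ?L h"
      using H chyp_mono[of lt v X Y _ _ ?L] M'L by blast
    then have inL: "(v, cfact (snd C) X Y) \<in> ?L" using LMC_rule[OF C XY] by blast
    show "(v, cfact (snd C) X Y) \<in> M'"
    proof (cases "(X, Y) \<in> P")
      case False
      then show ?thesis using inL unfolding M'_def factsAt_def by auto
    next
      case True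
      have "\<forall>h\<in>set (fst C). chyp lt v X Y (cl F lt P ?E \<union> ?E) h"
      proof
        fix h assume h: "h \<in> set (fst C)"
        have S: "\<And>f. hfact v X Y h = Some f \<Longrightarrow> f \<in> factsAt P \<union> U"
          using loc[OF C h True XY] by blast
        have "chyp lt v X Y (M' \<inter> (factsAt P \<union> U)) h"
          using chyp_restrict[OF S] H h by blast
        moreover have "M' \<inter> (factsAt P \<union> U) \<subseteq> cl F lt P ?E \<union> ?E"
          unfolding M'_def by blast
        ultimately show "chyp lt v X Y (cl F lt P ?E \<union> ?E) h" using chyp_mono by blast
      qed
      then have "(v, cfact (snd C) X Y) \<in> cl F lt P ?E"
        using cl_closed[of F lt P ?E] C True XY unfolding closedAt_def by blast
      then show ?thesis unfolding M'_def by blast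
    qed
  qed
  then have "?L \<subseteq> M'" by (rule LMC_least)
  then show "?L \<inter> factsAt P \<subseteq> cl F lt P ?E" unfolding M'_def by blast
qed

fun mapf :: "(nat \<Rightarrow> nat) \<Rightarrow> vfact \<Rightarrow> vfact" where
  "mapf \<phi> (v, FR S p q) = (v, FR S (\<phi> p) (\<phi> q))"
| "mapf \<phi> (v, FB p q) = (v, FB (\<phi> p) (\<phi> q))"

lemma mapf_cfact[simp]: "mapf \<phi> (v, cfact c X Y) = (v, cfact c (\<phi> X) (\<phi> Y))"
  by (cases c) auto

lemma pt_mapf: "pt (snd (mapf \<phi> f)) = (\<phi> (fst (pt (snd f))), \<phi> (snd (pt (snd f))))"
proof -
  obtain v g where "f = (v, g)" by (cases f)
  then show ?thesis by (cases g) auto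
qed

definition factsDom :: "nat set \<Rightarrow> vfact set" where
  "factsDom Dm = {f. fst (pt (snd f)) \<in> Dm \<and> snd (pt (snd f)) \<in> Dm}"

lemma transl:
  assumes equiv: "\<And>C h v X Y M. C \<in> set F \<Longrightarrow> h \<in> set (fst C) \<Longrightarrow> (X, Y) \<in> P \<Longrightarrow>
        M \<subseteq> factsDom Dm \<Longrightarrow> chyp lt v X Y M h = chyp lt' v (\<phi> X) (\<phi> Y) (mapf \<phi> ` M) h"
    and P': "P' = (\<lambda>(X, Y). (\<phi> X, \<phi> Y)) ` P"
    and Ppos: "\<And>X Y. (X, Y) \<in> P \<Longrightarrow> 1 \<le> X \<and> 1 \<le> Y \<and> 1 \<le> \<phi> X \<and> 1 \<le> \<phi> Y"
    and PD: "factsAt P \<subseteq> factsDom Dm"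
    and E: "E \<subseteq> factsDom Dm"
  shows "cl F lt' P' (mapf \<phi> ` E) = mapf \<phi> ` cl F lt P E"
proof
  let ?c1 = "cl F lt P E"
  have c1D: "?c1 \<subseteq> factsDom Dm" using cl_sub PD by blast
  have s1: "mapf \<phi> ` ?c1 \<subseteq> factsAt P'"
  proof
    fix g assume "g \<in> mapf \<phi> ` ?c1"
    then obtain f where f: "f \<in> ?c1" "g = mapf \<phi> f" by blast
    obtain a b where ab: "pt (snd f) = (a, b)" by (cases "pt (snd f)")
    have "f \<in> factsAt P" using f(1) cl_sub[of F lt P E] by blast
    then have "(a, b) \<in> P" using ab unfolding factsAt_def by simp
    then have "(\<phi> a, \<phi> b) \<in> P'" unfolding P'
      by (rule image_eqI[rotated]) simp
    moreover have "pt (snd g) = (\<phi> a, \<phi> b)" using f(2) pt_mapf[of \<phi> f] ab by simp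
    ultimately show "g \<in> factsAt P'" unfolding factsAt_def by simp
  qed
  have s2: "closedAt F lt' P' (mapf \<phi> ` E) (mapf \<phi> ` ?c1)"
    unfolding closedAt_def
  proof (intro ballI allI impI)
    fix C v X' Y'
    assume C: "C \<in> set F" and P'm: "(X', Y') \<in> P'" and XY: "1 \<le> X'" "1 \<le> Y'"
      and H: "\<forall>h\<in>set (fst C). chyp lt' v X' Y' (mapf \<phi> ` ?c1 \<union> mapf \<phi> ` E) h"
    obtain X Y where XY0: "(X, Y) \<in> P" "X' = \<phi> X" "Y' = \<phi> Y" using P'm P' by auto
    have "\<forall>h\<in>set (fst C). chyp lt v X Y (?c1 \<union> E) h"
    proof
      fix h assume h: "h \<in> set (fst C)"
      have "chyp lt' v (\<phi> X) (\<phi> Y) (mapf \<phi> ` (?c1 \<union> E)) h"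
        using H h XY0 by (simp add: image_Un)
      then show "chyp lt v X Y (?c1 \<union> E) h"
        using equiv[OF C h XY0(1), of "?c1 \<union> E" v] c1D E by blast
    qed
    then have "(v, cfact (snd C) X Y) \<in> ?c1"
      using cl_closed[of F lt P E] C XY0(1) Ppos[OF XY0(1)] unfolding closedAt_def by blast
    then have "mapf \<phi> (v, cfact (snd C) X Y) \<in> mapf \<phi> ` ?c1" by blast
    then show "(v, cfact (snd C) X' Y') \<in> mapf \<phi> ` ?c1" using XY0 by simp
  qed
  show "cl F lt' P' (mapf \<phi> ` E) \<subseteq> mapf \<phi> ` ?c1" using cl_least[OF s1 s2] .
  define Z where "Z = {f \<in> factsAt P. mapf \<phi> f \<in> cl F lt' P' (mapf \<phi> ` E)}"
  have z1: "Z \<subseteq> factsAt P" unfolding Z_def by blast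
  have z2: "closedAt F lt P E Z"
    unfolding closedAt_def
  proof (intro ballI allI impI)
    fix C v X Y
    assume C: "C \<in> set F" and Pm: "(X, Y) \<in> P" and XY: "1 \<le> X" "1 \<le> Y"
      and H: "\<forall>h\<in>set (fst C). chyp lt v X Y (Z \<union> E) h"
    have ZD: "Z \<union> E \<subseteq> factsDom Dm" using z1 PD E by blast
    have "\<forall>h\<in>set (fst C). chyp lt' v (\<phi> X) (\<phi> Y) (cl F lt' P' (mapf \<phi> ` E) \<union> mapf \<phi> ` E) h"
    proof
      fix h assume h: "h \<in> set (fst C)"
      have "chyp lt' v (\<phi> X) (\<phi> Y) (mapf \<phi> ` (Z \<union> E)) h"
        using equiv[OF C h Pm ZD, of v] H h by blast
      moreover have "mapf \<phi> ` (Z \<union> E) \<subseteq> cl F lt' P' (mapf \<phi> ` E) \<union> mapf \<phi> ` E"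
        unfolding Z_def by blast
      ultimately show "chyp lt' v (\<phi> X) (\<phi> Y) (cl F lt' P' (mapf \<phi> ` E) \<union> mapf \<phi> ` E) h"
        by (rule chyp_mono)
    qed
    moreover have "(\<phi> X, \<phi> Y) \<in> P'" unfolding P' using Pm
      by (rule image_eqI[rotated]) simp
    ultimately have "(v, cfact (snd C) (\<phi> X) (\<phi> Y)) \<in> cl F lt' P' (mapf \<phi> ` E)"
      using cl_closed[of F lt' P' "mapf \<phi> ` E"] C Ppos[OF Pm] unfolding closedAt_def by blast
    then show "(v, cfact (snd C) X Y) \<in> Z" unfolding Z_def factsAt_def using Pm by simp
  qed
  have "?c1 \<subseteq> Z" using cl_least[OF z1 z2] .
  then show "mapf \<phi> ` ?c1 \<subseteq> cl F lt' P' (mapf \<phi> ` E)" unfolding Z_def by blast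
qed


definition BB :: "nat \<Rightarrow> nat" where "BB K = 4 * K + 12"

definition sx :: "nat \<Rightarrow> nat \<Rightarrow> nat" where "sx K x = x - min x (BB K)"
definition sy :: "nat \<Rightarrow> nat \<Rightarrow> nat \<Rightarrow> nat" where
  "sy K x c = (x + 2 * c - 2) - (min x (BB K) + 2 * min c (BB K) - 2)"

definition phi :: "nat \<Rightarrow> nat \<Rightarrow> nat \<Rightarrow> nat \<Rightarrow> nat" where
  "phi K x c k = (if k \<le> x + 1 then k - sx K x else k - sy K x c)"

definition Dm :: "nat \<Rightarrow> nat \<Rightarrow> nat \<Rightarrow> nat set" where
  "Dm K x c = {k. 1 \<le> k \<and> ((x \<le> k + (K + 4) \<and> k \<le> x) \<or> (x + 2 * c \<le> k + (K + 6) \<and> k + 1 \<le> x + 2 * c))}"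

lemma sx_small: "x \<le> BB K \<Longrightarrow> sx K x = 0"
  unfolding sx_def by simp
lemma sx_big: "x \<ge> BB K \<Longrightarrow> sx K x + BB K = x"
  unfolding sx_def by simp
lemma sy_small: "1 \<le> c \<Longrightarrow> c \<le> BB K \<Longrightarrow> sy K x c = sx K x"
  unfolding sy_def sx_def by (simp add: min_def)
lemma sy_big: "1 \<le> c \<Longrightarrow> c \<ge> BB K \<Longrightarrow> sy K x c + 2 * BB K = sx K x + 2 * c"
  unfolding sy_def sx_def BB_def by (cases "x \<le> 4 * K + 12") (simp_all add: min_def)
lemma BB_ge: "BB K \<ge> 4 * K + 12"
  unfolding BB_def by simp

lemma phi_x: "k \<le> x + 1 \<Longrightarrow> phi K x c k = k - sx K x"
  unfolding phi_def by simp
lemma phi_y: "\<not> k \<le> x + 1 \<Longrightarrow> phi K x c k = k - sy K x c"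
  unfolding phi_def by simp

lemma Dm_cases:
  assumes "1 \<le> c" "k \<in> Dm K x c"
  shows "(1 \<le> k \<and> k \<le> x \<and> x \<le> k + (K + 4)) \<or>
         (1 \<le> k \<and> x + 2 * c \<le> k + (K + 6) \<and> k + 1 \<le> x + 2 * c)"
  using assms unfolding Dm_def by auto

lemma phi_lane:
  assumes x: "1 \<le> x" and c: "1 \<le> c" and k: "k \<in> Dm K x c"
  shows "(k \<le> x \<and> x \<le> k + (K + 4) \<and> phi K x c k + sx K x = k) \<or>
         (x + 2 * c \<le> k + (K + 6) \<and> k + 1 \<le> x + 2 * c \<and> phi K x c k + sy K x c = k \<and>
           (c \<le> BB K \<or> x + 1 < k))"
proof -
  have B: "BB K \<ge> 4 * K + 12" by (rule BB_ge)
  have sxle: "sx K x \<le> x" unfolding sx_def by simp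
  have sxb: "x \<le> BB K \<Longrightarrow> sx K x = 0" by (rule sx_small)
  have sxb2: "x \<ge> BB K \<Longrightarrow> sx K x + BB K = x" by (rule sx_big)
  from Dm_cases[OF c k] show ?thesis
  proof
    assume a: "1 \<le> k \<and> k \<le> x \<and> x \<le> k + (K + 4)"
    then have "phi K x c k = k - sx K x" by (simp add: phi_x)
    moreover have "sx K x \<le> k" using a sxb sxb2 B by (cases "x \<le> BB K") auto
    ultimately show ?thesis using a by simp
  next
    assume a: "1 \<le> k \<and> x + 2 * c \<le> k + (K + 6) \<and> k + 1 \<le> x + 2 * c"
    show ?thesis
    proof (cases "c \<le> BB K")
      case True
      then have sy: "sy K x c = sx K x" using sy_small c by blast
      have "sx K x \<le> k" using a sxb sxb2 B c by (cases "x \<le> BB K") auto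
      then have "phi K x c k + sy K x c = k" using sy by (cases "k \<le> x + 1") (auto simp: phi_x phi_y)
      then show ?thesis using a True by simp
    next
      case False
      then have sy: "sy K x c + 2 * BB K = sx K x + 2 * c" using sy_big c by simp
      have xk: "x + 1 < k" using a False B by linarith
      have "sy K x c \<le> k" using a sy sxle B False by linarith
      then have "phi K x c k + sy K x c = k" using xk by (simp add: phi_y)
      then show ?thesis using a xk by simp
    qed
  qed
qed

lemma sy_facts:
  assumes "1 \<le> c"
  shows "(c \<le> BB K \<and> sy K x c = sx K x) \<or> (BB K < c \<and> sy K x c + 2 * BB K = sx K x + 2 * c)"
  using sy_small[OF assms] sy_big[OF assms] by (cases "c \<le> BB K") auto

lemma sx_facts: "(x \<le> BB K \<and> sx K x = 0) \<or> (BB K \<le> x \<and> sx K x + BB K = x)"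
  using sx_small sx_big by (cases "x \<le> BB K") auto

lemma phi_mono:
  assumes x: "1 \<le> x" and c: "1 \<le> c" and p: "p \<in> Dm K x c" and q: "q \<in> Dm K x c"
  shows "(p \<le> q) = (phi K x c p \<le> phi K x c q)"
proof (cases "c \<le> BB K")
  case True
  then have sy: "sy K x c = sx K x" using sy_small c by blast
  have "phi K x c p + sx K x = p" using phi_lane[OF x c p] sy by auto
  moreover have "phi K x c q + sx K x = q" using phi_lane[OF x c q] sy by auto
  ultimately show ?thesis by linarith
next
  case False
  then have sy: "sy K x c + 2 * BB K = sx K x + 2 * c" using sy_big c by simp
  have B: "BB K \<ge> 4 * K + 12" by (rule BB_ge)
  from phi_lane[OF x c p] show ?thesis
  proof (elim disjE)
    assume p1: "(p \<le> x) \<and> (x \<le> p + (K + 4)) \<and> (phi K x c p + sx K x = p)"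
    from phi_lane[OF x c q] show ?thesis
    proof (elim disjE)
      assume "(q \<le> x) \<and> (x \<le> q + (K + 4)) \<and> (phi K x c q + sx K x = q)"
      then show ?thesis using p1 by linarith
    next
      assume "(x + 2 * c \<le> q + (K + 6)) \<and> (q + 1 \<le> x + 2 * c) \<and> (phi K x c q + sy K x c = q) \<and> (c \<le> BB K \<or> x + 1 < q)"
      then show ?thesis using p1 sy B False by linarith
    qed
  next
    assume p1: "(x + 2 * c \<le> p + (K + 6)) \<and> (p + 1 \<le> x + 2 * c) \<and> (phi K x c p + sy K x c = p) \<and> (c \<le> BB K \<or> x + 1 < p)"
    from phi_lane[OF x c q] show ?thesis
    proof (elim disjE)
      assume "(q \<le> x) \<and> (x \<le> q + (K + 4)) \<and> (phi K x c q + sx K x = q)"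
      then show ?thesis using p1 sy B False by linarith
    next
      assume "(x + 2 * c \<le> q + (K + 6)) \<and> (q + 1 \<le> x + 2 * c) \<and> (phi K x c q + sy K x c = q) \<and> (c \<le> BB K \<or> x + 1 < q)"
      then show ?thesis using p1 by linarith
    qed
  qed
qed

lemma phi_inj:
  assumes x: "1 \<le> x" and c: "1 \<le> c" and p: "p \<in> Dm K x c" and q: "q \<in> Dm K x c"
  shows "(p = q) = (phi K x c p = phi K x c q)"
  using phi_mono[OF x c p q] phi_mono[OF x c q p] by auto

lemma phi_pos:
  assumes x: "1 \<le> x" and c: "1 \<le> c" and p: "p \<in> Dm K x c"
  shows "1 \<le> phi K x c p"
proof -
  have B: "BB K \<ge> 4 * K + 12" by (rule BB_ge)
  from phi_lane[OF x c p] show ?thesis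
  proof (elim disjE)
    assume p1: "(p \<le> x) \<and> (x \<le> p + (K + 4)) \<and> (phi K x c p + sx K x = p)"
    show ?thesis
    proof (cases "x \<le> BB K")
      case True then show ?thesis using p1 sx_small[OF True] p unfolding Dm_def by simp
    next
      case False then show ?thesis using p1 sx_big[of K x] B by linarith
    qed
  next
    assume p1: "(x + 2 * c \<le> p + (K + 6)) \<and> (p + 1 \<le> x + 2 * c) \<and> (phi K x c p + sy K x c = p) \<and> (c \<le> BB K \<or> x + 1 < p)"
    show ?thesis
    proof (cases "c \<le> BB K")
      case True
      then have sy: "sy K x c = sx K x" using sy_small c by blast
      show ?thesis
      proof (cases "x \<le> BB K")
        case True then show ?thesis using p1 sy sx_small[OF True] p unfolding Dm_def by simp
      next
        case False then show ?thesis using p1 sy sx_big[of K x] B c by linarith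
      qed
    next
      case False
      then have sy: "sy K x c + 2 * BB K = sx K x + 2 * c" using sy_big c by simp
      have "sx K x \<le> x" unfolding sx_def by simp
      then show ?thesis using p1 sy B False by linarith
    qed
  qed
qed

lemma inj_phi: "1 \<le> x \<Longrightarrow> 1 \<le> c \<Longrightarrow> inj_on (phi K x c) (Dm K x c)"
  unfolding inj_on_def using phi_inj by blast

definition xh :: "nat \<Rightarrow> nat \<Rightarrow> nat" where "xh K x = min x (BB K)"
definition yh :: "nat \<Rightarrow> nat \<Rightarrow> nat \<Rightarrow> nat" where "yh K x c = min x (BB K) + 2 * min c (BB K) - 2"

lemma laneX:
  assumes x: "1 \<le> x" and c: "1 \<le> c"
  shows "((\<forall>k. k \<le> x + 1 \<longrightarrow> phi K x c k = k) \<and> xh K x = x) \<or>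
         ((\<forall>k. x \<le> k + (K + 4) \<and> k \<le> x + 1 \<longrightarrow> phi K x c k + sx K x = k \<and> K + 2 \<le> phi K x c k)
           \<and> xh K x + sx K x = x \<and> K + 6 \<le> xh K x)"
proof (cases "x \<le> BB K")
  case True
  then show ?thesis using sx_small[OF True] by (simp add: phi_x xh_def)
next
  case False
  have B: "BB K \<ge> 4 * K + 12" by (rule BB_ge)
  have sx: "sx K x + BB K = x" using sx_big[of K x] False by simp
  have "\<forall>k. x \<le> k + (K + 4) \<and> k \<le> x + 1 \<longrightarrow> phi K x c k + sx K x = k \<and> K + 2 \<le> phi K x c k"
  proof (intro allI impI)
    fix k assume k: "x \<le> k + (K + 4) \<and> k \<le> x + 1"
    then have "phi K x c k = k - sx K x" by (simp add: phi_x)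
    then show "phi K x c k + sx K x = k \<and> K + 2 \<le> phi K x c k" using k sx B by linarith
  qed
  moreover have "xh K x + sx K x = x" "K + 6 \<le> xh K x" using sx False B unfolding xh_def by auto
  ultimately show ?thesis by blast
qed

lemma yh_sy: "1 \<le> c \<Longrightarrow> yh K x c + sy K x c = x + 2 * c - 2"
  unfolding yh_def sy_def BB_def by (cases "x \<le> 4 * K + 12"; cases "c \<le> 4 * K + 12") (simp_all add: min_def)

lemma laneY:
  assumes x: "1 \<le> x" and c: "1 \<le> c"
  shows "((\<forall>k. phi K x c k = k) \<and> yh K x c = x + 2 * c - 2) \<or>
         (\<exists>s. (\<forall>k. x + 2 * c \<le> k + (K + 6) \<and> k \<le> x + 2 * c - 1 \<longrightarrow> phi K x c k + s = k \<and> K + 2 \<le> phi K x c k)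
           \<and> yh K x c + s = x + 2 * c - 2 \<and> K + 6 \<le> yh K x c)"
proof -
  have B: "BB K \<ge> 4 * K + 12" by (rule BB_ge)
  have ys: "yh K x c + sy K x c = x + 2 * c - 2" using yh_sy[OF c] .
  show ?thesis
  proof (cases "c \<le> BB K")
    case True
    then have sy: "sy K x c = sx K x" using sy_small c by blast
    show ?thesis
    proof (cases "x \<le> BB K")
      case True
      then have "sx K x = 0" by (rule sx_small)
      then have "\<forall>k. phi K x c k = k" using sy unfolding phi_def by simp
      moreover have "yh K x c = x + 2 * c - 2" using ys sy \<open>sx K x = 0\<close> by simp
      ultimately show ?thesis by blast
    next
      case False
      have sx: "sx K x + BB K = x" using sx_big[of K x] False by simp
      have "\<forall>k. x + 2 * c \<le> k + (K + 6) \<and> k \<le> x + 2 * c - 1 \<longrightarrow> phi K x c k + sx K x = k \<and> K + 2 \<le> phi K x c k"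
      proof (intro allI impI)
        fix k assume k: "x + 2 * c \<le> k + (K + 6) \<and> k \<le> x + 2 * c - 1"
        have "phi K x c k = k - sx K x" using sy unfolding phi_def by simp
        then show "phi K x c k + sx K x = k \<and> K + 2 \<le> phi K x c k" using k sx B c by linarith
      qed
      moreover have "yh K x c + sx K x = x + 2 * c - 2" "K + 6 \<le> yh K x c" using ys sy sx B c by linarith+
      ultimately show ?thesis by blast
    qed
  next
    case False
    then have sy: "sy K x c + 2 * BB K = sx K x + 2 * c" using sy_big c by simp
    have sxl: "sx K x \<le> x" unfolding sx_def by simp
    have "\<forall>k. x + 2 * c \<le> k + (K + 6) \<and> k \<le> x + 2 * c - 1 \<longrightarrow> phi K x c k + sy K x c = k \<and> K + 2 \<le> phi K x c k"
    proof (intro allI impI)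
      fix k assume k: "x + 2 * c \<le> k + (K + 6) \<and> k \<le> x + 2 * c - 1"
      have "\<not> k \<le> x + 1" using k False B by linarith
      then have "phi K x c k = k - sy K x c" by (simp add: phi_y)
      then show "phi K x c k + sy K x c = k \<and> K + 2 \<le> phi K x c k" using k sy sxl B False by linarith
    qed
    moreover have "K + 6 \<le> yh K x c" using ys sy sxl B False by linarith
    ultimately show ?thesis using ys by blast
  qed
qed

lemma shift_mp:
  assumes f: "\<forall>k. lo \<le> k \<and> k \<le> hi \<longrightarrow> f k + s = k \<and> K + 2 \<le> f k"
    and u: "lo + K \<le> u" "u \<le> hi" and a: "a \<le> K"
  shows "f (minus_pred u a) = minus_pred (f u) a \<and> (minus_pred u a = 1) = (minus_pred (f u) a = 1)
         \<and> minus_pred u a + a = u"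
proof -
  have fu: "f u + s = u" "K + 2 \<le> f u" using f u by auto
  have "lo \<le> u - a" "u - a \<le> hi" using u a by auto
  then have fua: "f (u - a) + s = u - a" using f by blast
  have m1: "minus_pred u a = u - a" using fu a by (simp add: mp_eq)
  have m2: "minus_pred (f u) a = f u - a" using fu a by (simp add: mp_eq)
  show ?thesis unfolding m1 m2 using fu fua a by arith
qed

lemma id_mp:
  assumes f: "\<forall>k. k \<le> hi \<longrightarrow> f k = k" and u: "u \<le> hi"
  shows "f (minus_pred u a) = minus_pred (f u) a \<and> (minus_pred u a = 1) = (minus_pred (f u) a = 1)"
proof -
  have "minus_pred u a \<le> u" by (rule mp_le)
  then show ?thesis using f u by simp
qed


fun hoffs :: "'a hyp \<Rightarrow> nat set" where
  "hoffs (HInput s a) = {a}"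
| "hoffs (HUnary U var a pos) = {a}"
| "hoffs (HRel S a b) = {a, b}"
| "hoffs (HRelRev S b a) = {a, b}"

lemma mapf_inj:
  assumes inj: "inj_on f Dd"
  shows "inj_on (mapf f) (factsDom Dd)"
proof (rule inj_onI)
  fix g1 g2 assume g1: "g1 \<in> factsDom Dd" and g2: "g2 \<in> factsDom Dd" and eq: "mapf f g1 = mapf f g2"
  obtain v1 h1 where 1: "g1 = (v1, h1)" by (cases g1)
  obtain v2 h2 where 2: "g2 = (v2, h2)" by (cases g2)
  show "g1 = g2"
    using g1 g2 eq inj unfolding 1 2 factsDom_def
    by (cases h1; cases h2) (auto dest: inj_onD)
qed

lemma chyp_phi:
  assumes mono: "\<And>p q. p \<in> Dd \<Longrightarrow> q \<in> Dd \<Longrightarrow> (p \<le> q) = (f p \<le> f q)"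
    and XD: "X \<in> Dd" and YD: "Y \<in> Dd"
    and mpD: "\<And>a. a \<le> K \<Longrightarrow> minus_pred X a \<in> Dd \<and> minus_pred Y a \<in> Dd"
    and mpf: "\<And>a. a \<le> K \<Longrightarrow> f (minus_pred X a) = minus_pred (f X) a \<and> f (minus_pred Y a) = minus_pred (f Y) a"
    and mp1: "\<And>a. a \<le> K \<Longrightarrow> (minus_pred X a = 1) = (minus_pred (f X) a = 1) \<and>
                                 (minus_pred Y a = 1) = (minus_pred (f Y) a = 1)"
    and ltc: "\<And>a. X = Y \<Longrightarrow> a \<le> K \<Longrightarrow> lt (minus_pred X a) = lt' (minus_pred (f X) a)"
    and hK: "\<forall>a\<in>hoffs h. a \<le> K"
    and M: "M \<subseteq> factsDom Dd"
  shows "chyp lt v X Y M h = chyp lt' v (f X) (f Y) (mapf f ` M) h"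
proof -
  have inj: "\<And>p q. p \<in> Dd \<Longrightarrow> q \<in> Dd \<Longrightarrow> (p = q) = (f p = f q)"
  proof -
    fix p q assume "p \<in> Dd" "q \<in> Dd"
    then have "(p \<le> q) = (f p \<le> f q)" "(q \<le> p) = (f q \<le> f p)" using mono by auto
    then show "(p = q) = (f p = f q)" by (metis order_antisym order_refl)
  qed
  have injo: "inj_on f Dd" unfolding inj_on_def using inj by blast
  have fmax: "\<And>p q. p \<in> Dd \<Longrightarrow> q \<in> Dd \<Longrightarrow> f (max p q) = max (f p) (f q)"
    using mono by (simp add: max_def)
  have maxD: "\<And>p q. p \<in> Dd \<Longrightarrow> q \<in> Dd \<Longrightarrow> max p q \<in> Dd" by (simp add: max_def)
  have mi: "inj_on (mapf f) (factsDom Dd)" by (rule mapf_inj[OF injo])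
  have vs: "\<And>X' Y'. X' \<in> Dd \<Longrightarrow> Y' \<in> Dd \<Longrightarrow>
      vsel v X Y X' Y' = vsel v (f X) (f Y) (f X') (f Y')"
  proof -
    fix X' Y' assume a: "X' \<in> Dd" "Y' \<in> Dd"
    have "(max X' Y' = max X Y) = (f (max X' Y') = f (max X Y))"
      using inj maxD a XD YD by blast
    then show "vsel v X Y X' Y' = vsel v (f X) (f Y) (f X') (f Y')"
      unfolding vsel_def using fmax a XD YD by simp
  qed
  have memb: "\<And>g. g \<in> factsDom Dd \<Longrightarrow> (g \<in> M) = (mapf f g \<in> mapf f ` M)"
    using mi M by (meson inj_on_image_mem_iff)
  show ?thesis
  proof (cases h)
    case (HInput s a)
    have "(X = Y) = (f X = f Y)" using inj XD YD by blast
    then show ?thesis using HInput ltc hK by auto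
  next
    case (HUnary U var a pos)
    have a: "a \<le> K" using hK HUnary by simp
    let ?Z = "var_val var X Y"
    have Zf: "var_val var (f X) (f Y) = f ?Z" by (cases var) (auto simp: var_val_def)
    have ZD: "minus_pred ?Z a \<in> Dd" using mpD[OF a] by (cases var) (auto simp: var_val_def)
    have Zm: "f (minus_pred ?Z a) = minus_pred (f ?Z) a" using mpf[OF a] by (cases var) (auto simp: var_val_def)
    have Z1: "(minus_pred ?Z a = 1) = (minus_pred (f ?Z) a = 1)" using mp1[OF a] by (cases var) (auto simp: var_val_def)
    have "(minus_pred ?Z a = max X Y) = (f (minus_pred ?Z a) = f (max X Y))"
      using inj ZD maxD XD YD by blast
    then have "cunary v U X Y (minus_pred ?Z a) = cunary v U (f X) (f Y) (minus_pred (f ?Z) a)"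
      unfolding cunary_def using Z1 Zm fmax[OF XD YD] by (cases U) auto
    then show ?thesis using HUnary Zf by simp
  next
    case (HRel S a b)
    have ab: "a \<le> K" "b \<le> K" using hK HRel by auto
    let ?X' = "minus_pred X a" and ?Y' = "minus_pred Y b"
    have D': "?X' \<in> Dd" "?Y' \<in> Dd" using mpD ab by auto
    have e1: "f ?X' = minus_pred (f X) a" "f ?Y' = minus_pred (f Y) b" using mpf ab by auto
    have "mapf f (vsel v X Y ?X' ?Y', FR S ?X' ?Y') =
          (vsel v (f X) (f Y) (minus_pred (f X) a) (minus_pred (f Y) b), FR S (minus_pred (f X) a) (minus_pred (f Y) b))"
      using vs[OF D'] e1 by simp
    moreover have "(vsel v X Y ?X' ?Y', FR S ?X' ?Y') \<in> factsDom Dd" using D' unfolding factsDom_def by simp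
    ultimately show ?thesis using HRel memb by simp
  next
    case (HRelRev S b a)
    have ab: "a \<le> K" "b \<le> K" using hK HRelRev by auto
    let ?X' = "minus_pred X a" and ?Y' = "minus_pred Y b"
    have D': "?X' \<in> Dd" "?Y' \<in> Dd" using mpD ab by auto
    have e1: "f ?X' = minus_pred (f X) a" "f ?Y' = minus_pred (f Y) b" using mpf ab by auto
    have "mapf f (vsel v X Y ?Y' ?X', FR S ?Y' ?X') =
          (vsel v (f X) (f Y) (minus_pred (f Y) b) (minus_pred (f X) a), FR S (minus_pred (f Y) b) (minus_pred (f X) a))"
      using vs[OF D'(2) D'(1)] e1 by simp
    moreover have "(vsel v X Y ?Y' ?X', FR S ?Y' ?X') \<in> factsDom Dd" using D' unfolding factsDom_def by simp
    ultimately show ?thesis using HRelRev memb by simp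
  qed
qed


definition ibox :: "nat \<Rightarrow> nat \<Rightarrow> nat \<Rightarrow> nat \<Rightarrow> nat \<Rightarrow> bool" where
  "ibox D bx by p q \<longleftrightarrow> p \<le> bx \<and> bx \<le> p + D \<and> q \<le> by + 1 \<and> by + 1 \<le> q + D"

definition inW :: "nat \<Rightarrow> nat \<Rightarrow> nat \<Rightarrow> nat \<Rightarrow> nat \<Rightarrow> bool" where
  "inW D bx by p q \<longleftrightarrow> ibox D bx by p q \<or> ibox D bx by q p"

definition PP :: "nat \<Rightarrow> nat \<Rightarrow> nat \<Rightarrow> nat \<Rightarrow> bool" where
  "PP x y p q \<longleftrightarrow> (p = x \<and> q = y) \<or> (p = x \<and> q = y + 1) \<or> (p = x - 1 \<and> q = y + 1)"

definition Pset :: "nat \<Rightarrow> nat \<Rightarrow> (nat \<times> nat) set" where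
  "Pset x y = {(p, q). 1 \<le> p \<and> 1 \<le> q \<and> (PP x y p q \<or> PP x y q p)}"

definition nbW :: "nat \<Rightarrow> nat \<Rightarrow> nat \<Rightarrow> nat \<Rightarrow> nat \<Rightarrow> nat \<Rightarrow> bool" where
  "nbW D c x y p q \<longleftrightarrow> (c \<noteq> 1 \<and> inW D x (y - 2) p q) \<or> inW D (x - 1) (y - 1) p q \<or> inW D (x - 2) y p q"

lemma region:
  assumes x: "1 \<le> x" and c: "1 \<le> c" and y: "y = x + 2 * c - 2" and p: "1 \<le> p" and q: "1 \<le> q"
    and b: "ibox (K + 2) x y p q"
  shows "(p, q) \<in> Pset x y \<or> nbW (K + 2) c x y p q"
proof -
  have b': "p \<le> x" "x \<le> p + (K + 2)" "q \<le> y + 1" "y + 1 \<le> q + (K + 2)" using b unfolding ibox_def by auto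
  consider "q + 1 \<le> y" | "q = y" | "q = y + 1" using b' by linarith
  then show ?thesis
  proof cases
    case 1
    show ?thesis
    proof (cases "c = 1")
      case True
      then have "ibox (K + 2) (x - 1) (y - 1) q p" using b' 1 y x unfolding ibox_def by auto
      then show ?thesis unfolding nbW_def inW_def by blast
    next
      case False
      then have "ibox (K + 2) x (y - 2) p q" using b' 1 y x c unfolding ibox_def by auto
      then show ?thesis using False unfolding nbW_def inW_def by blast
    qed
  next
    case 2
    show ?thesis
    proof (cases "p = x")
      case True then show ?thesis using 2 p q unfolding Pset_def PP_def by auto
    next
      case False
      then have "ibox (K + 2) (x - 1) (y - 1) p q" using b' 2 y x c unfolding ibox_def by auto
      then show ?thesis unfolding nbW_def inW_def by blast
    qed
  next
    case 3
    show ?thesis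
    proof (cases "p + 2 \<le> x")
      case False
      then have "p = x \<or> p = x - 1" using b' by linarith
      then show ?thesis using 3 p q unfolding Pset_def PP_def by auto
    next
      case True
      then have "ibox (K + 2) (x - 2) y p q" using b' 3 unfolding ibox_def by auto
      then show ?thesis unfolding nbW_def inW_def by blast
    qed
  qed
qed

lemma Pset_sym: "((p, q) \<in> Pset x y) = ((q, p) \<in> Pset x y)"
  unfolding Pset_def by auto

lemma nbW_sym: "nbW D c x y p q = nbW D c x y q p"
  unfolding nbW_def inW_def by auto

lemma mp_ge: "x - a \<le> minus_pred x a"
  by (simp add: mp_eq)

lemma locality_pt:
  assumes x: "1 \<le> x" and c: "1 \<le> c" and y: "y = x + 2 * c - 2"
    and P: "(X, Y) \<in> Pset x y" and a: "a \<le> K" and b: "b \<le> K"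
  shows "(minus_pred X a, minus_pred Y b) \<in> Pset x y \<or> nbW (K + 2) c x y (minus_pred X a) (minus_pred Y b)"
proof -
  have XY: "1 \<le> X" "1 \<le> Y" using P unfolding Pset_def by auto
  have m: "1 \<le> minus_pred X a" "1 \<le> minus_pred Y b" using XY mp_pos by auto
  have l: "minus_pred X a \<le> X" "minus_pred Y b \<le> Y" by (rule mp_le)+
  have g: "X - a \<le> minus_pred X a" "Y - b \<le> minus_pred Y b" by (rule mp_ge)+
  from P have "PP x y X Y \<or> PP x y Y X" unfolding Pset_def by auto
  then show ?thesis
  proof
    assume pp: "PP x y X Y"
    then have "ibox (K + 2) x y (minus_pred X a) (minus_pred Y b)"
      using l g a b unfolding PP_def ibox_def by auto
    then show ?thesis using region[OF x c y m] by blast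
  next
    assume pp: "PP x y Y X"
    then have "ibox (K + 2) x y (minus_pred Y b) (minus_pred X a)"
      using l g a b unfolding PP_def ibox_def by auto
    then show ?thesis using region[OF x c y m(2) m(1)] Pset_sym nbW_sym by blast
  qed
qed


datatype rfct = RR nat bool nat nat | RB bool nat nat
type_synonym rvf = "ver \<times> rfct"

definition dpt :: "nat \<Rightarrow> nat \<Rightarrow> bool \<Rightarrow> nat \<Rightarrow> nat \<Rightarrow> nat \<times> nat" where
  "dpt bx byy ob d1 d2 = (if ob then (bx - d1, byy + 1 - d2) else (byy + 1 - d2, bx - d1))"

fun decode :: "nat \<Rightarrow> nat \<Rightarrow> rvf \<Rightarrow> vfact" where
  "decode bx byy (v, RR S ob d1 d2) = (v, FR S (fst (dpt bx byy ob d1 d2)) (snd (dpt bx byy ob d1 d2)))"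
| "decode bx byy (v, RB ob d1 d2) = (v, FB (fst (dpt bx byy ob d1 d2)) (snd (dpt bx byy ob d1 d2)))"

fun roffs :: "rvf \<Rightarrow> bool \<times> nat \<times> nat" where
  "roffs (v, RR S ob d1 d2) = (ob, d1, d2)"
| "roffs (v, RB ob d1 d2) = (ob, d1, d2)"

fun rname :: "rvf \<Rightarrow> nat option" where
  "rname (v, RR S ob d1 d2) = Some S"
| "rname (v, RB ob d1 d2) = None"

definition RelWin :: "nat set \<Rightarrow> nat \<Rightarrow> rvf set" where
  "RelWin RN D = {r. (case rname r of None \<Rightarrow> True | Some S \<Rightarrow> S \<in> RN) \<and>
      fst (snd (roffs r)) \<le> D \<and> snd (snd (roffs r)) \<le> D}"

fun okname :: "nat set \<Rightarrow> fct \<Rightarrow> bool" where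
  "okname RN (FR S p q) = (S \<in> RN)"
| "okname RN (FB p q) = True"

definition WF :: "nat set \<Rightarrow> nat \<Rightarrow> nat \<Rightarrow> nat \<Rightarrow> vfact set" where
  "WF RN D bx byy = {g. posf g \<and> inW D bx byy (fst (pt (snd g))) (snd (pt (snd g))) \<and> okname RN (snd g)}"

lemma pt_decode: "pt (snd (decode bx byy r)) = (case roffs r of (ob, d1, d2) \<Rightarrow> dpt bx byy ob d1 d2)"
proof -
  obtain v h where r: "r = (v, h)" by (cases r)
  show ?thesis unfolding r by (cases h) auto
qed

lemma okname_decode: "r \<in> RelWin RN D \<Longrightarrow> okname RN (snd (decode bx byy r))"
proof -
  assume a: "r \<in> RelWin RN D"
  obtain v h where r: "r = (v, h)" by (cases r)
  show ?thesis using a unfolding r RelWin_def by (cases h) auto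
qed

lemma decode_WF:
  assumes r: "r \<in> RelWin RN D" and p: "posf (decode bx byy r)"
  shows "decode bx byy r \<in> WF RN D bx byy"
proof -
  obtain ob d1 d2 where ob: "roffs r = (ob, d1, d2)" by (cases "roffs r") auto
  have d: "d1 \<le> D" "d2 \<le> D" using r ob unfolding RelWin_def by auto
  have pt: "pt (snd (decode bx byy r)) = dpt bx byy ob d1 d2" using pt_decode[of bx byy r] ob by simp
  have pos: "1 \<le> fst (dpt bx byy ob d1 d2)" "1 \<le> snd (dpt bx byy ob d1 d2)" using p pt unfolding posf_def by auto
  have "inW D bx byy (fst (dpt bx byy ob d1 d2)) (snd (dpt bx byy ob d1 d2))"
    using pos d unfolding inW_def ibox_def dpt_def by (cases ob) auto
  then show ?thesis using p pt okname_decode[OF r] unfolding WF_def by simp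
qed

lemma WF_decode:
  assumes g: "g \<in> WF RN D bx byy"
  shows "\<exists>r\<in>RelWin RN D. decode bx byy r = g"
proof -
  obtain v h where gv: "g = (v, h)" by (cases g)
  obtain p q where pq: "pt h = (p, q)" by (cases "pt h")
  have pos: "1 \<le> p" "1 \<le> q" using g gv pq unfolding WF_def posf_def by auto
  have w: "inW D bx byy p q" using g gv pq unfolding WF_def by auto
  have ok: "okname RN h" using g gv unfolding WF_def by auto
  obtain ob d1 d2 where od: "d1 \<le> D" "d2 \<le> D" "dpt bx byy ob d1 d2 = (p, q)"
  proof (cases "ibox D bx byy p q")
    case True
    then have "bx - p \<le> D" "byy + 1 - q \<le> D" "dpt bx byy True (bx - p) (byy + 1 - q) = (p, q)"
      unfolding ibox_def dpt_def by auto
    then show ?thesis using that by blast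
  next
    case False
    then have "ibox D bx byy q p" using w unfolding inW_def by auto
    then have "bx - q \<le> D" "byy + 1 - p \<le> D" "dpt bx byy False (bx - q) (byy + 1 - p) = (p, q)"
      unfolding ibox_def dpt_def by auto
    then show ?thesis using that by blast
  qed
  show ?thesis
  proof (cases h)
    case (FR S p' q')
    then have "(v, RR S ob d1 d2) \<in> RelWin RN D" "decode bx byy (v, RR S ob d1 d2) = g"
      using od ok pq gv unfolding RelWin_def by auto
    then show ?thesis by blast
  next
    case (FB p' q')
    then have "(v, RB ob d1 d2) \<in> RelWin RN D" "decode bx byy (v, RB ob d1 d2) = g"
      using od ok pq gv unfolding RelWin_def by auto
    then show ?thesis by blast
  qed
qed

fun hnames :: "'a hyp \<Rightarrow> nat set" where
  "hnames (HRel S a b) = {S}"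
| "hnames (HRelRev S b a) = {S}"
| "hnames _ = {}"

fun cnames :: "concl \<Rightarrow> nat set" where
  "cnames (CRel R) = {R}"
| "cnames CBot = {}"

definition RNof :: "'a horn_formula \<Rightarrow> nat set" where
  "RNof F = (\<Union>C\<in>set F. (\<Union>h\<in>set (fst C). hnames h) \<union> cnames (snd C))"

definition Kof :: "'a horn_formula \<Rightarrow> nat" where
  "Kof F = Max ({0} \<union> (\<Union>C\<in>set F. \<Union>h\<in>set (fst C). hoffs h))"

lemma finite_hoffs: "finite (hoffs h)"
  by (cases h) auto

lemma hoffs_le: "C \<in> set F \<Longrightarrow> h \<in> set (fst C) \<Longrightarrow> a \<in> hoffs h \<Longrightarrow> a \<le> Kof F"
  unfolding Kof_def by (rule Max_ge) (auto simp: finite_hoffs)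

lemma finite_RNof: "finite (RNof F)"
proof -
  have "\<And>h. finite (hnames h)" by (case_tac h) auto
  moreover have "\<And>c. finite (cnames c)" by (case_tac c) auto
  ultimately show ?thesis unfolding RNof_def by auto
qed

lemma LMC_okname: "g \<in> LMC F lt \<Longrightarrow> okname (RNof F) (snd g)"
proof -
  have "closedM F lt {g. okname (RNof F) (snd g)}"
    unfolding closedM_def
  proof (intro ballI allI impI)
    fix C v X Y assume C: "C \<in> set F"
    show "(v, cfact (snd C) X Y) \<in> {g. okname (RNof F) (snd g)}"
      using C unfolding RNof_def by (cases "snd C") force+
  qed
  then show "g \<in> LMC F lt \<Longrightarrow> okname (RNof F) (snd g)" using LMC_least by blast
qed

lemma hfact_okname: "C \<in> set F \<Longrightarrow> h \<in> set (fst C) \<Longrightarrow> hfact v X Y h = Some g \<Longrightarrow> okname (RNof F) (snd g)"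
  unfolding RNof_def by (cases h) force+

lemma hfact_pt: assumes "hfact v X Y h = Some g" shows "
   (\<exists>a b. a \<in> hoffs h \<and> b \<in> hoffs h \<and> (pt (snd g) = (minus_pred X a, minus_pred Y b) \<or> pt (snd g) = (minus_pred Y b, minus_pred X a)))"
proof (cases h)
  case (HRel S a b)
  then show ?thesis using assms by (intro exI[of _ a] exI[of _ b]) auto
next
  case (HRelRev S b a)
  then show ?thesis using assms by (intro exI[of _ a] exI[of _ b]) auto
qed (use assms in auto)

definition dat :: "'a horn_formula \<Rightarrow> nat \<Rightarrow> (nat \<Rightarrow> 'a) \<Rightarrow> nat \<Rightarrow> nat \<Rightarrow> rvf set" where
  "dat F D lt bx byy = {r \<in> RelWin (RNof F) D. decode bx byy r \<in> LMC F lt}"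

lemma decode_dat: "decode bx byy ` dat F D lt bx byy = LMC F lt \<inter> WF (RNof F) D bx byy"
proof
  show "decode bx byy ` dat F D lt bx byy \<subseteq> LMC F lt \<inter> WF (RNof F) D bx byy"
    unfolding dat_def using decode_WF LMC_pos by blast
  show "LMC F lt \<inter> WF (RNof F) D bx byy \<subseteq> decode bx byy ` dat F D lt bx byy"
  proof
    fix g assume g: "g \<in> LMC F lt \<inter> WF (RNof F) D bx byy"
    then obtain r where "r \<in> RelWin (RNof F) D" "decode bx byy r = g" using WF_decode by blast
    then show "g \<in> decode bx byy ` dat F D lt bx byy" using g unfolding dat_def by blast
  qed
qed

definition Unb :: "nat set \<Rightarrow> nat \<Rightarrow> nat \<Rightarrow> nat \<Rightarrow> nat \<Rightarrow> vfact set" where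
  "Unb RN D c x y = (if c = 1 then {} else WF RN D x (y - 2)) \<union> WF RN D (x - 1) (y - 1) \<union> WF RN D (x - 2) y"

lemma locality:
  assumes x: "1 \<le> x" and c: "1 \<le> c" and y: "y = x + 2 * c - 2"
    and C: "C \<in> set F" and h: "h \<in> set (fst C)" and P: "(X, Y) \<in> Pset x y"
    and g: "hfact v X Y h = Some g"
  shows "g \<in> factsAt (Pset x y) \<union> Unb (RNof F) (Kof F + 2) c x y"
proof -
  let ?K = "Kof F"
  obtain a b where ab: "a \<in> hoffs h" "b \<in> hoffs h"
    and pt: "pt (snd g) = (minus_pred X a, minus_pred Y b) \<or> pt (snd g) = (minus_pred Y b, minus_pred X a)"
    using hfact_pt[OF g] by blast
  have ak: "a \<le> ?K" "b \<le> ?K" using hoffs_le[OF C h] ab by auto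
  have XY: "1 \<le> X" "1 \<le> Y" using P unfolding Pset_def by auto
  have L: "(minus_pred X a, minus_pred Y b) \<in> Pset x y \<or> nbW (?K + 2) c x y (minus_pred X a) (minus_pred Y b)"
    using locality_pt[OF x c y P ak] .
  have L2: "pt (snd g) \<in> Pset x y \<or> nbW (?K + 2) c x y (fst (pt (snd g))) (snd (pt (snd g)))"
    using L pt Pset_sym nbW_sym by auto
  have pos: "posf g" using pt XY mp_pos unfolding posf_def by auto
  have ok: "okname (RNof F) (snd g)" using hfact_okname[OF C h g] .
  from L2 show ?thesis
  proof
    assume "pt (snd g) \<in> Pset x y" then show ?thesis unfolding factsAt_def by blast
  next
    assume "nbW (?K + 2) c x y (fst (pt (snd g))) (snd (pt (snd g)))"
    then show ?thesis using pos ok unfolding nbW_def Unb_def WF_def by auto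
  qed
qed

lemma coverage:
  assumes x: "1 \<le> x" and c: "1 \<le> c" and y: "y = x + 2 * c - 2"
    and g: "g \<in> WF RN (K + 2) x y"
  shows "g \<in> factsAt (Pset x y) \<union> Unb RN (K + 2) c x y"
proof -
  obtain p q where pq: "pt (snd g) = (p, q)" by (cases "pt (snd g)")
  have pos: "1 \<le> p" "1 \<le> q" using g pq unfolding WF_def posf_def by auto
  have w: "ibox (K + 2) x y p q \<or> ibox (K + 2) x y q p" using g pq unfolding WF_def inW_def by auto
  have "(p, q) \<in> Pset x y \<or> nbW (K + 2) c x y p q"
    using w region[OF x c y pos] region[OF x c y pos(2) pos(1)] Pset_sym nbW_sym by blast
  then show ?thesis
  proof
    assume "(p, q) \<in> Pset x y" then show ?thesis using pq unfolding factsAt_def by auto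
  next
    assume "nbW (K + 2) c x y p q"
    then show ?thesis using g pq unfolding nbW_def Unb_def WF_def by auto
  qed
qed


lemma shift_mp2:
  assumes f: "\<forall>k. R k \<longrightarrow> f k + s = k \<and> K + 2 \<le> f k"
    and u: "R u" "R (u - a)" and a: "a \<le> K"
  shows "f (minus_pred u a) = minus_pred (f u) a \<and> (minus_pred u a = 1) = (minus_pred (f u) a = 1)"
proof -
  have fu: "f u + s = u" "K + 2 \<le> f u" using f u by auto
  have fua: "f (u - a) + s = u - a" using f u by blast
  have m1: "minus_pred u a = u - a" using fu a by (simp add: mp_eq)
  have m2: "minus_pred (f u) a = f u - a" using fu a by (simp add: mp_eq)
  show ?thesis unfolding m1 m2 using fu fua a by arith
qed

lemma coordX:
  assumes x: "1 \<le> x" and c: "1 \<le> c" and u: "1 \<le> u" "u \<le> x" "x \<le> u + 1" and a: "a \<le> K"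
  shows "u \<in> Dm K x c \<and> minus_pred u a \<in> Dm K x c \<and>
         phi K x c (minus_pred u a) = minus_pred (phi K x c u) a \<and>
         (minus_pred u a = 1) = (minus_pred (phi K x c u) a = 1)"
proof -
  have m: "1 \<le> minus_pred u a" "minus_pred u a \<le> u" "u - a \<le> minus_pred u a"
    using mp_pos[OF u(1)] mp_le mp_ge by auto
  have D: "u \<in> Dm K x c" "minus_pred u a \<in> Dm K x c" using u m a unfolding Dm_def by auto
  from laneX[OF x c, of K] have "phi K x c (minus_pred u a) = minus_pred (phi K x c u) a \<and>
         (minus_pred u a = 1) = (minus_pred (phi K x c u) a = 1)"
  proof
    assume "(\<forall>k. k \<le> x + 1 \<longrightarrow> phi K x c k = k) \<and> xh K x = x"
    then show ?thesis using id_mp[of "x + 1" "phi K x c" u a] u by auto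
  next
    assume h: "(\<forall>k. x \<le> k + (K + 4) \<and> k \<le> x + 1 \<longrightarrow> phi K x c k + sx K x = k \<and> K + 2 \<le> phi K x c k)
           \<and> xh K x + sx K x = x \<and> K + 6 \<le> xh K x"
    have "x \<le> (u - a) + (K + 4) \<and> u - a \<le> x + 1" "x \<le> u + (K + 4) \<and> u \<le> x + 1"
      using h u a by auto
    then show ?thesis using shift_mp2[of "\<lambda>k. x \<le> k + (K + 4) \<and> k \<le> x + 1" "phi K x c" "sx K x" K u a] h a
      by blast
  qed
  then show ?thesis using D by blast
qed

lemma coordY:
  assumes x: "1 \<le> x" and c: "1 \<le> c" and u: "x + 2 * c \<le> u + 2" "u + 1 \<le> x + 2 * c" and a: "a \<le> K"
  shows "u \<in> Dm K x c \<and> minus_pred u a \<in> Dm K x c \<and>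
         phi K x c (minus_pred u a) = minus_pred (phi K x c u) a \<and>
         (minus_pred u a = 1) = (minus_pred (phi K x c u) a = 1)"
proof -
  have u1: "1 \<le> u" using u x c by linarith
  have m: "1 \<le> minus_pred u a" "minus_pred u a \<le> u" "u - a \<le> minus_pred u a"
    using mp_pos[OF u1] mp_le mp_ge by auto
  have D: "u \<in> Dm K x c" "minus_pred u a \<in> Dm K x c" using u u1 m a unfolding Dm_def by auto
  from laneY[OF x c, of K] have "phi K x c (minus_pred u a) = minus_pred (phi K x c u) a \<and>
         (minus_pred u a = 1) = (minus_pred (phi K x c u) a = 1)"
  proof
    assume "(\<forall>k. phi K x c k = k) \<and> yh K x c = x + 2 * c - 2"
    then show ?thesis by simp
  next
    assume "\<exists>s. (\<forall>k. x + 2 * c \<le> k + (K + 6) \<and> k \<le> x + 2 * c - 1 \<longrightarrow> phi K x c k + s = k \<and> K + 2 \<le> phi K x c k)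
           \<and> yh K x c + s = x + 2 * c - 2 \<and> K + 6 \<le> yh K x c"
    then obtain s where h: "\<forall>k. x + 2 * c \<le> k + (K + 6) \<and> k \<le> x + 2 * c - 1 \<longrightarrow> phi K x c k + s = k \<and> K + 2 \<le> phi K x c k"
      "yh K x c + s = x + 2 * c - 2" "K + 6 \<le> yh K x c" by blast
    have "x + 2 * c \<le> (u - a) + (K + 6) \<and> u - a \<le> x + 2 * c - 1" "x + 2 * c \<le> u + (K + 6) \<and> u \<le> x + 2 * c - 1"
      using h u a by auto
    then show ?thesis using shift_mp2[of "\<lambda>k. x + 2 * c \<le> k + (K + 6) \<and> k \<le> x + 2 * c - 1" "phi K x c" s K u a] h a
      by blast
  qed
  then show ?thesis using D by blast
qed

lemma decX:
  assumes x: "1 \<le> x" and c: "1 \<le> c" and d: "d \<le> K + 4"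
  shows "phi K x c (x - d) = xh K x - d \<and> (1 \<le> x - d) = (1 \<le> xh K x - d)"
  using laneX[OF x c, of K]
proof
  assume "(\<forall>k. k \<le> x + 1 \<longrightarrow> phi K x c k = k) \<and> xh K x = x"
  then show ?thesis by simp
next
  assume h: "(\<forall>k. x \<le> k + (K + 4) \<and> k \<le> x + 1 \<longrightarrow> phi K x c k + sx K x = k \<and> K + 2 \<le> phi K x c k)
           \<and> xh K x + sx K x = x \<and> K + 6 \<le> xh K x"
  moreover have "x \<le> (x - d) + (K + 4) \<and> x - d \<le> x + 1" using d by auto
  ultimately have "phi K x c (x - d) + sx K x = x - d" by blast
  then show ?thesis using h d by auto
qed

lemma decY:
  assumes x: "1 \<le> x" and c: "1 \<le> c" and d: "d \<le> K + 4"
  shows "phi K x c (x + 2 * c - 1 - d) = yh K x c + 1 - d \<and> (1 \<le> x + 2 * c - 1 - d) = (1 \<le> yh K x c + 1 - d)"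
  using laneY[OF x c, of K]
proof
  assume "(\<forall>k. phi K x c k = k) \<and> yh K x c = x + 2 * c - 2"
  then show ?thesis using x c by simp
next
  assume "\<exists>s. (\<forall>k. x + 2 * c \<le> k + (K + 6) \<and> k \<le> x + 2 * c - 1 \<longrightarrow> phi K x c k + s = k \<and> K + 2 \<le> phi K x c k)
           \<and> yh K x c + s = x + 2 * c - 2 \<and> K + 6 \<le> yh K x c"
  then obtain s where h: "\<forall>k. x + 2 * c \<le> k + (K + 6) \<and> k \<le> x + 2 * c - 1 \<longrightarrow> phi K x c k + s = k \<and> K + 2 \<le> phi K x c k"
      "yh K x c + s = x + 2 * c - 2" "K + 6 \<le> yh K x c" by blast
  moreover have "x + 2 * c \<le> (x + 2 * c - 1 - d) + (K + 6) \<and> x + 2 * c - 1 - d \<le> x + 2 * c - 1" using d h by auto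
  ultimately have "phi K x c (x + 2 * c - 1 - d) + s = x + 2 * c - 1 - d" by blast
  then show ?thesis using h d by auto
qed


definition cOK :: "nat \<Rightarrow> nat \<Rightarrow> nat \<Rightarrow> nat \<Rightarrow> bool" where
  "cOK K x c u \<longleftrightarrow> u \<in> Dm K x c \<and> (\<forall>a \<le> K. minus_pred u a \<in> Dm K x c \<and>
         phi K x c (minus_pred u a) = minus_pred (phi K x c u) a \<and>
         (minus_pred u a = 1) = (minus_pred (phi K x c u) a = 1))"

lemma Pset_coords:
  assumes x: "1 \<le> x" and c: "1 \<le> c" and y: "y = x + 2 * c - 2" and P: "(X, Y) \<in> Pset x y"
  shows "cOK K x c X \<and> cOK K x c Y"
proof -
  have ok: "cOK K x c u" if "1 \<le> u" "u = x \<or> u = x - 1 \<or> u = y \<or> u = y + 1" for u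
  proof -
    from that consider "1 \<le> u" "u \<le> x" "x \<le> u + 1" | "x + 2 * c \<le> u + 2" "u + 1 \<le> x + 2 * c"
      using y x c by linarith
    then show ?thesis
    proof cases
      case 1 then show ?thesis using coordX[OF x c 1] unfolding cOK_def by blast
    next
      case 2 then show ?thesis using coordY[OF x c 2] unfolding cOK_def by blast
    qed
  qed
  from P show ?thesis unfolding Pset_def PP_def using ok by auto
qed

lemma Pset_diag:
  assumes x: "1 \<le> x" and c: "1 \<le> c" and y: "y = x + 2 * c - 2" and P: "(X, X) \<in> Pset x y"
  shows "c = 1 \<and> X = x"
  using P x c y unfolding Pset_def PP_def by auto

lemma site_equiv:
  assumes x: "1 \<le> x" and c: "1 \<le> c" and y: "y = x + 2 * c - 2" and P: "(X, Y) \<in> Pset x y"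
    and C: "C \<in> set F" and h: "h \<in> set (fst C)" and M: "M \<subseteq> factsDom (Dm (Kof F) x c)"
    and LT: "c = 1 \<Longrightarrow> \<forall>a \<le> Kof F. lt (minus_pred x a) = lt' (minus_pred (phi (Kof F) x c x) a)"
  shows "chyp lt v X Y M h = chyp lt' v (phi (Kof F) x c X) (phi (Kof F) x c Y) (mapf (phi (Kof F) x c) ` M) h"
proof -
  let ?K = "Kof F"
  have co: "cOK ?K x c X" "cOK ?K x c Y" using Pset_coords[OF x c y P] by auto
  show ?thesis
  proof (rule chyp_phi[where Dd = "Dm ?K x c" and K = ?K])
    show "\<And>p q. p \<in> Dm ?K x c \<Longrightarrow> q \<in> Dm ?K x c \<Longrightarrow> (p \<le> q) = (phi ?K x c p \<le> phi ?K x c q)"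
      using phi_mono[OF x c] by blast
    show "X \<in> Dm ?K x c" "Y \<in> Dm ?K x c" using co unfolding cOK_def by auto
    show "\<And>a. a \<le> ?K \<Longrightarrow> minus_pred X a \<in> Dm ?K x c \<and> minus_pred Y a \<in> Dm ?K x c"
      using co unfolding cOK_def by auto
    show "\<And>a. a \<le> ?K \<Longrightarrow> phi ?K x c (minus_pred X a) = minus_pred (phi ?K x c X) a \<and>
        phi ?K x c (minus_pred Y a) = minus_pred (phi ?K x c Y) a"
      using co unfolding cOK_def by auto
    show "\<And>a. a \<le> ?K \<Longrightarrow> (minus_pred X a = 1) = (minus_pred (phi ?K x c X) a = 1) \<and>
        (minus_pred Y a = 1) = (minus_pred (phi ?K x c Y) a = 1)"
      using co unfolding cOK_def by auto
    show "\<And>a. X = Y \<Longrightarrow> a \<le> ?K \<Longrightarrow> lt (minus_pred X a) = lt' (minus_pred (phi ?K x c X) a)"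
      using Pset_diag[OF x c y] P LT by auto
    show "\<forall>a\<in>hoffs h. a \<le> ?K" using hoffs_le[OF C h] by blast
    show "M \<subseteq> factsDom (Dm ?K x c)" by (rule M)
  qed
qed

lemma Pset_image:
  assumes x: "1 \<le> x" and c: "1 \<le> c" and y: "y = x + 2 * c - 2"
  shows "(\<lambda>(X, Y). (phi K x c X, phi K x c Y)) ` Pset x y = Pset (xh K x) (yh K x c)"
proof -
  have e1: "phi K x c x = xh K x" using decX[OF x c, of 0 K] by simp
  have e2: "phi K x c (x - 1) = xh K x - 1 \<and> (1 \<le> x - 1) = (1 \<le> xh K x - 1)" using decX[OF x c, of 1 K] by simp
  have yy: "y = x + 2 * c - 1 - 1" "y + 1 = x + 2 * c - 1 - 0" using y x c by auto
  have e3: "phi K x c y = yh K x c" using decY[OF x c, of 1 K] yy by simp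
  have e4: "phi K x c (y + 1) = yh K x c + 1" using decY[OF x c, of 0 K] yy by simp
  have xpos1: "1 \<le> xh K x" using decX[OF x c, of 0 K] x by auto
  have yq: "1 \<le> x + 2 * c - 1 - 1" using x c by linarith
  have xpos2: "1 \<le> yh K x c" using decY[OF x c, of 1 K] yq by auto
  note xpos = xpos1 xpos2
  show ?thesis
  proof
    show "(\<lambda>(X, Y). (phi K x c X, phi K x c Y)) ` Pset x y \<subseteq> Pset (xh K x) (yh K x c)"
    proof
      fix z assume "z \<in> (\<lambda>(X, Y). (phi K x c X, phi K x c Y)) ` Pset x y"
      then obtain X Y where XY: "(X, Y) \<in> Pset x y" "z = (phi K x c X, phi K x c Y)" by auto
      then show "z \<in> Pset (xh K x) (yh K x c)"
        using e1 e2 e3 e4 xpos unfolding Pset_def PP_def by auto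
    qed
    show "Pset (xh K x) (yh K x c) \<subseteq> (\<lambda>(X, Y). (phi K x c X, phi K x c Y)) ` Pset x y"
    proof
      fix z assume z: "z \<in> Pset (xh K x) (yh K x c)"
      obtain p q where pq: "z = (p, q)" by (cases z)
      have "\<exists>X Y. (X, Y) \<in> Pset x y \<and> p = phi K x c X \<and> q = phi K x c Y"
      proof -
        have pp: "1 \<le> p" "1 \<le> q" "PP (xh K x) (yh K x c) p q \<or> PP (xh K x) (yh K x c) q p"
          using z pq unfolding Pset_def by auto
        have y1: "1 \<le> y" using y x c by linarith
        from pp(3) show ?thesis
          unfolding PP_def
        proof (elim disjE conjE)
          assume "p = xh K x" "q = yh K x c"
          then show ?thesis using e1 e3 x y1 by (intro exI[of _ x] exI[of _ y]) (auto simp: Pset_def PP_def)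
        next
          assume "p = xh K x" "q = yh K x c + 1"
          then show ?thesis using e1 e4 x y1 by (intro exI[of _ x] exI[of _ "y + 1"]) (auto simp: Pset_def PP_def)
        next
          assume "p = xh K x - 1" "q = yh K x c + 1"
          then show ?thesis using e2 e4 pp(1) y1 by (intro exI[of _ "x - 1"] exI[of _ "y + 1"]) (auto simp: Pset_def PP_def)
        next
          assume "q = xh K x" "p = yh K x c"
          then show ?thesis using e1 e3 x y1 by (intro exI[of _ y] exI[of _ x]) (auto simp: Pset_def PP_def)
        next
          assume "q = xh K x" "p = yh K x c + 1"
          then show ?thesis using e1 e4 x y1 by (intro exI[of _ "y + 1"] exI[of _ x]) (auto simp: Pset_def PP_def)
        next
          assume "q = xh K x - 1" "p = yh K x c + 1"
          then show ?thesis using e2 e4 pp(2) y1 by (intro exI[of _ "y + 1"] exI[of _ "x - 1"]) (auto simp: Pset_def PP_def)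
        qed
      qed
      then show "z \<in> (\<lambda>(X, Y). (phi K x c X, phi K x c Y)) ` Pset x y" using pq by force
    qed
  qed
qed

lemma PsetD:
  assumes x: "1 \<le> x" and c: "1 \<le> c" and y: "y = x + 2 * c - 2"
  shows "factsAt (Pset x y) \<subseteq> factsDom (Dm K x c)"
proof
  fix g assume g: "g \<in> factsAt (Pset x y)"
  obtain p q where pq: "pt (snd g) = (p, q)" by (cases "pt (snd g)")
  have "cOK K x c p \<and> cOK K x c q" using Pset_coords[OF x c y] g pq unfolding factsAt_def by auto
  then show "g \<in> factsDom (Dm K x c)" using pq unfolding factsDom_def cOK_def by auto
qed

lemma UnbD:
  assumes x: "1 \<le> x" and c: "1 \<le> c" and y: "y = x + 2 * c - 2"
  shows "Unb RN (K + 2) c x y \<subseteq> factsDom (Dm K x c)"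
proof
  fix g assume g: "g \<in> Unb RN (K + 2) c x y"
  obtain p q where pq: "pt (snd g) = (p, q)" by (cases "pt (snd g)")
  have pos: "1 \<le> p" "1 \<le> q" using g pq unfolding Unb_def WF_def posf_def by (auto split: if_splits)
  have lanes: "(p \<le> x \<and> x \<le> p + (K + 4) \<and> x + 2 * c \<le> q + (K + 6) \<and> q + 1 \<le> x + 2 * c) \<or>
               (q \<le> x \<and> x \<le> q + (K + 4) \<and> x + 2 * c \<le> p + (K + 6) \<and> p + 1 \<le> x + 2 * c)"
    using g pq pos x c y unfolding Unb_def WF_def inW_def ibox_def by (auto split: if_splits)
  then show "g \<in> factsDom (Dm K x c)" using pq pos unfolding factsDom_def Dm_def by auto
qed


fun shL :: "rvf \<Rightarrow> rvf" where
  "shL (v, RR S ob d1 d2) = (v, RR S ob d1 (d2 + 2))"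
| "shL (v, RB ob d1 d2) = (v, RB ob d1 (d2 + 2))"
fun shM :: "rvf \<Rightarrow> rvf" where
  "shM (v, RR S ob d1 d2) = (v, RR S ob (d1 + 1) (d2 + 1))"
| "shM (v, RB ob d1 d2) = (v, RB ob (d1 + 1) (d2 + 1))"
fun shR :: "rvf \<Rightarrow> rvf" where
  "shR (v, RR S ob d1 d2) = (v, RR S ob (d1 + 2) d2)"
| "shR (v, RB ob d1 d2) = (v, RB ob (d1 + 2) d2)"

lemma decode_shL: "2 \<le> y \<Longrightarrow> decode x y (shL r) = decode x (y - 2) r"
proof -
  assume y: "2 \<le> y"
  obtain v h where r: "r = (v, h)" by (cases r)
  show ?thesis unfolding r using y by (cases h) (auto simp: dpt_def)
qed

lemma decode_shM: "1 \<le> y \<Longrightarrow> decode x y (shM r) = decode (x - 1) (y - 1) r"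
proof -
  assume y: "1 \<le> y"
  obtain v h where r: "r = (v, h)" by (cases r)
  show ?thesis unfolding r using y by (cases h) (auto simp: dpt_def)
qed

lemma decode_shR: "decode x y (shR r) = decode (x - 2) y r"
proof -
  obtain v h where r: "r = (v, h)" by (cases r)
  show ?thesis unfolding r by (cases h) (auto simp: dpt_def)
qed

lemma sh_RelWin:
  assumes "r \<in> RelWin RN (K + 2)"
  shows "shL r \<in> RelWin RN (K + 4)" "shM r \<in> RelWin RN (K + 4)" "shR r \<in> RelWin RN (K + 4)"
proof -
  obtain v h where r: "r = (v, h)" by (cases r)
  show "shL r \<in> RelWin RN (K + 4)" "shM r \<in> RelWin RN (K + 4)" "shR r \<in> RelWin RN (K + 4)"
    using assms unfolding r RelWin_def by (cases h; auto)+
qed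

lemma dec_map:
  assumes x: "1 \<le> x" and c: "1 \<le> c" and y: "y = x + 2 * c - 2"
    and r: "r \<in> RelWin RN (K + 4)"
  shows "posf (decode (xh K x) (yh K x c) r) = posf (decode x y r)"
    "posf (decode x y r) \<Longrightarrow> decode (xh K x) (yh K x c) r = mapf (phi K x c) (decode x y r)"
proof -
  obtain v h where rv: "r = (v, h)" by (cases r)
  obtain ob d1 d2 where od: "roffs r = (ob, d1, d2)" by (cases "roffs r") auto
  have d: "d1 \<le> K + 4" "d2 \<le> K + 4" using r od unfolding RelWin_def by auto
  have y1: "y + 1 - d2 = x + 2 * c - 1 - d2" using y x c by auto
  have X: "phi K x c (x - d1) = xh K x - d1 \<and> (1 \<le> x - d1) = (1 \<le> xh K x - d1)" using decX[OF x c d(1)] .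
  have Y: "phi K x c (y + 1 - d2) = yh K x c + 1 - d2 \<and> (1 \<le> y + 1 - d2) = (1 \<le> yh K x c + 1 - d2)"
    using decY[OF x c d(2)] y1 by simp
  have pt1: "pt (snd (decode x y r)) = dpt x y ob d1 d2" using pt_decode[of x y r] od by simp
  have pt2: "pt (snd (decode (xh K x) (yh K x c) r)) = dpt (xh K x) (yh K x c) ob d1 d2"
    using pt_decode[of "xh K x" "yh K x c" r] od by simp
  show "posf (decode (xh K x) (yh K x c) r) = posf (decode x y r)"
    unfolding posf_def pt1 pt2 using X Y by (cases ob) (auto simp: dpt_def)
  show "posf (decode x y r) \<Longrightarrow> decode (xh K x) (yh K x c) r = mapf (phi K x c) (decode x y r)"
    using X Y od unfolding rv by (cases h) (auto simp: dpt_def)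
qed

definition aggN :: "'a horn_formula \<Rightarrow> (nat \<Rightarrow> 'a) \<Rightarrow> nat \<Rightarrow> nat \<Rightarrow> bool" where
  "aggN F lt x y = (\<exists>p q. p \<le> x \<and> q \<le> y \<and> ((VN, FB p q) \<in> LMC F lt \<or> (VN, FB q p) \<in> LMC F lt))"

definition rowX :: "'a horn_formula \<Rightarrow> (nat \<Rightarrow> 'a) \<Rightarrow> nat \<Rightarrow> nat \<Rightarrow> bool" where
  "rowX F lt x y = (\<exists>p. p \<le> x \<and> ((VX, FB p y) \<in> LMC F lt \<or> (VX, FB y p) \<in> LMC F lt))"

lemma aggN_rec:
  assumes x: "1 \<le> x" and c: "1 \<le> c" and y: "y = x + 2 * c - 2"
  shows "aggN F lt x y = ((c \<noteq> 1 \<and> aggN F lt x (y - 2)) \<or> aggN F lt (x - 1) (y - 1) \<or> aggN F lt (x - 2) y \<or>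
     (VN, FB x (y - 1)) \<in> LMC F lt \<or> (VN, FB (y - 1) x) \<in> LMC F lt \<or>
     (VN, FB x y) \<in> LMC F lt \<or> (VN, FB y x) \<in> LMC F lt \<or>
     (VN, FB (x - 1) y) \<in> LMC F lt \<or> (VN, FB y (x - 1)) \<in> LMC F lt)" (is "?L = ?R")
proof
  assume r: ?R
  have m: "\<And>x' y'. x' \<le> x \<Longrightarrow> y' \<le> y \<Longrightarrow> aggN F lt x' y' \<Longrightarrow> aggN F lt x y"
    unfolding aggN_def by (meson le_trans)
  show ?L
  proof -
    have "x - 1 \<le> x" "y - 1 \<le> y" "x - 2 \<le> x" "y - 2 \<le> y" by auto
    then show ?thesis using r m unfolding aggN_def by blast
  qed
next
  assume ?L
  then obtain p q where pq: "p \<le> x" "q \<le> y" and B: "(VN, FB p q) \<in> LMC F lt \<or> (VN, FB q p) \<in> LMC F lt"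
    unfolding aggN_def by blast
  consider "q + 2 \<le> y" | "q + 1 = y" | "q = y" using pq by linarith
  then show ?R
  proof cases
    case 1
    show ?thesis
    proof (cases "c = 1")
      case True
      then have "q \<le> x - 2" "p \<le> y" using 1 y pq by auto
      then have "aggN F lt (x - 2) y" using B unfolding aggN_def by blast
      then show ?thesis by blast
    next
      case False
      then have "aggN F lt x (y - 2)" using B 1 pq unfolding aggN_def by (intro exI[of _ p] exI[of _ q]) auto
      then show ?thesis using False by blast
    qed
  next
    case 2
    show ?thesis
    proof (cases "p = x")
      case True then show ?thesis using B 2 by auto
    next
      case False
      then have "aggN F lt (x - 1) (y - 1)" using B 2 pq unfolding aggN_def by (intro exI[of _ p] exI[of _ q]) auto
      then show ?thesis by blast
    qed
  next
    case 3
    consider "p + 2 \<le> x" | "p + 1 = x" | "p = x" using pq by linarith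
    then show ?thesis
    proof cases
      case 1
      then have "aggN F lt (x - 2) y" using B 3 pq unfolding aggN_def by (intro exI[of _ p] exI[of _ q]) auto
      then show ?thesis by blast
    next
      case 2 then have "p = x - 1" by simp
      then show ?thesis using B 3 by auto
    next
      case 3 then show ?thesis using B \<open>q = y\<close> by auto
    qed
  qed
qed

lemma rowX_rec:
  assumes x: "1 \<le> x"
  shows "rowX F lt x y = (rowX F lt (x - 2) y \<or>
     (VX, FB (x - 1) y) \<in> LMC F lt \<or> (VX, FB y (x - 1)) \<in> LMC F lt \<or>
     (VX, FB x y) \<in> LMC F lt \<or> (VX, FB y x) \<in> LMC F lt)" (is "?L = ?R")
proof
  assume r: ?R
  have "x - 1 \<le> x" "x - 2 \<le> x" by auto
  then show ?L using r unfolding rowX_def by (meson le_trans order_refl)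
next
  assume ?L
  then obtain p where p: "p \<le> x" and B: "(VX, FB p y) \<in> LMC F lt \<or> (VX, FB y p) \<in> LMC F lt"
    unfolding rowX_def by blast
  consider "p + 2 \<le> x" | "p + 1 = x" | "p = x" using p by linarith
  then show ?R
  proof cases
    case 1 then have "rowX F lt (x - 2) y" using B unfolding rowX_def by (intro exI[of _ p]) auto
    then show ?thesis by blast
  next
    case 2 then have "p = x - 1" by simp
    then show ?thesis using B by auto
  next
    case 3 then show ?thesis using B by auto
  qed
qed


datatype 'a st = Lam | Act nat nat "'a list" "rvf set" bool bool bool

fun sdat :: "'a st \<Rightarrow> rvf set" where "sdat Lam = {}" | "sdat (Act _ _ _ d _ _ _) = d"
fun sagg :: "'a st \<Rightarrow> bool" where "sagg Lam = False" | "sagg (Act _ _ _ _ a _ _) = a"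
fun srow :: "'a st \<Rightarrow> bool" where "srow Lam = False" | "srow (Act _ _ _ _ _ r _) = r"
fun sacc :: "'a st \<Rightarrow> bool" where "sacc Lam = False" | "sacc (Act _ _ _ _ _ _ a) = a"

definition lets :: "(nat \<Rightarrow> 'a) \<Rightarrow> nat \<Rightarrow> nat \<Rightarrow> 'a list" where
  "lets lt K x = map (\<lambda>e. lt (max 1 (x - e))) [0..<K + 1]"

definition ExpXY :: "'a horn_formula \<Rightarrow> (nat \<Rightarrow> 'a) \<Rightarrow> nat \<Rightarrow> nat \<Rightarrow> 'a st" where
  "ExpXY F lt x c = (let K = Kof F; y = x + 2 * c - 2 in
     Act (min x (BB K)) (min c (BB K)) (lets lt K x) (dat F (K + 2) lt x y)
         (aggN F lt x y) (rowX F lt x y) (\<not> aggN F lt (x - 1) (y - 1) \<and> \<not> rowX F lt x y))"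

definition stepA :: "'a horn_formula \<Rightarrow> nat \<Rightarrow> 'a list \<Rightarrow> rvf set \<Rightarrow> bool \<Rightarrow> 'a st \<Rightarrow> 'a st \<Rightarrow> 'a st" where
  "stepA F cc' ls Ld La M R = (let K = Kof F; B = BB K;
     cx' = (case M of Lam \<Rightarrow> 1 | Act cx _ _ _ _ _ _ \<Rightarrow> min (cx + 1) B);
     yh' = cx' + 2 * cc' - 2;
     Old = shL ` Ld \<union> shM ` sdat M \<union> shR ` sdat R;
     E = decode cx' yh' ` Old;
     lt' = (\<lambda>k. ls ! (cx' - k));
     NEW = cl F lt' (Pset cx' yh') E;
     d' = {r \<in> RelWin (RNof F) (K + 2). decode cx' yh' r \<in> E \<union> NEW};
     bN = (\<lambda>d1 d2. (VN, RB True d1 d2) \<in> d' \<or> (VN, RB False d1 d2) \<in> d');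
     bX = (\<lambda>d1 d2. (VX, RB True d1 d2) \<in> d' \<or> (VX, RB False d1 d2) \<in> d');
     aN = (La \<or> sagg M \<or> sagg R \<or> bN 0 2 \<or> bN 0 1 \<or> bN 1 1);
     rX = (srow R \<or> bX 1 1 \<or> bX 0 1)
   in Act cx' cc' ls d' aN rX (\<not> sagg M \<and> \<not> rX))"

lemma dat_in_RelWin: "dat F D lt x y \<subseteq> RelWin (RNof F) D"
  unfolding dat_def by blast

lemma datE: "r \<in> dat F D lt x y \<Longrightarrow> decode x y r \<in> LMC F lt"
  unfolding dat_def by blast

lemma dat0: "dat F D lt 0 b = {}"
proof -
  have "\<not> decode 0 b r \<in> LMC F lt" for r
  proof
    assume a: "decode 0 b r \<in> LMC F lt"
    obtain v h where r: "r = (v, h)" by (cases r)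
    have "posf (decode 0 b r)" using LMC_pos[OF a] .
    then show False unfolding r by (cases h) (auto simp: posf_def dpt_def split: if_splits)
  qed
  then show ?thesis unfolding dat_def by blast
qed

lemma aggN0: "\<not> aggN F lt 0 y"
  unfolding aggN_def using LMC_pos by (fastforce simp: posf_def)

lemma rowX0: "\<not> rowX F lt 0 y"
  unfolding rowX_def using LMC_pos by (fastforce simp: posf_def)

lemma stepA_correct:
  fixes F :: "'a horn_formula" and lt :: "nat \<Rightarrow> 'a"
  defines "K \<equiv> Kof F"
  assumes x: "1 \<le> x" and c: "1 \<le> c" and y: "y = x + 2 * c - 2"
    and cc: "cc' = min c (BB K)"
    and ls: "ls = lets lt K x"
    and Ld: "Ld = (if c = 1 then {} else dat F (K + 2) lt x (y - 2))"
    and La: "La = (c \<noteq> 1 \<and> aggN F lt x (y - 2))"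
    and M: "M = (if x = 1 then Lam else ExpXY F lt (x - 1) c)"
    and R: "R = (if x \<le> 2 then Lam else ExpXY F lt (x - 2) (c + 1))"
  shows "stepA F cc' ls Ld La M R = ExpXY F lt x c"
proof -
  let ?B = "BB K"
  let ?L = "LMC F lt"
  let ?RN = "RNof F"
  let ?f = "phi K x c"
  let ?xh = "xh K x" and ?yh = "yh K x c"
  let ?P = "Pset x y"
  let ?U = "Unb ?RN (K + 2) c x y"
  have B: "?B \<ge> 4 * K + 12" by (rule BB_ge)
  have sM: "sdat M = dat F (K + 2) lt (x - 1) (y - 1)" "sagg M = aggN F lt (x - 1) (y - 1)"
  proof -
    have "x = 1 \<Longrightarrow> dat F (K + 2) lt (x - 1) (y - 1) = {}" using dat0 by simp
    moreover have "x = 1 \<Longrightarrow> \<not> aggN F lt (x - 1) (y - 1)" using aggN0 by simp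
    moreover have "x \<noteq> 1 \<Longrightarrow> y - 1 = (x - 1) + 2 * c - 2" using y x c by auto
    ultimately show "sdat M = dat F (K + 2) lt (x - 1) (y - 1)" "sagg M = aggN F lt (x - 1) (y - 1)"
      unfolding M ExpXY_def K_def by (auto simp: Let_def)
  qed
  have sR: "sdat R = dat F (K + 2) lt (x - 2) y" "sagg R = aggN F lt (x - 2) y" "srow R = rowX F lt (x - 2) y"
  proof -
    have "x \<le> 2 \<Longrightarrow> dat F (K + 2) lt (x - 2) y = {}" using dat0 by simp
    moreover have "x \<le> 2 \<Longrightarrow> \<not> aggN F lt (x - 2) y" using aggN0 by simp
    moreover have "x \<le> 2 \<Longrightarrow> \<not> rowX F lt (x - 2) y" using rowX0 by simp
    moreover have "\<not> x \<le> 2 \<Longrightarrow> y = (x - 2) + 2 * (c + 1) - 2" using y x c by auto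
    ultimately show "sdat R = dat F (K + 2) lt (x - 2) y" "sagg R = aggN F lt (x - 2) y" "srow R = rowX F lt (x - 2) y"
      unfolding R ExpXY_def K_def by (auto simp: Let_def)
  qed
  have cx: "(case M of Lam \<Rightarrow> 1 | Act cx _ _ _ _ _ _ \<Rightarrow> min (cx + 1) ?B) = ?xh"
    using x BB_ge[of "Kof F"] unfolding M ExpXY_def xh_def K_def by (auto simp: Let_def min_def)
  have yh: "?xh + 2 * cc' - 2 = ?yh" unfolding cc xh_def yh_def by simp
  define Old where "Old = shL ` Ld \<union> shM ` sdat M \<union> shR ` sdat R"
  have dOld: "decode x y ` Old = ?L \<inter> ?U"
  proof -
    have a1: "decode x y ` shL ` Ld = (if c = 1 then {} else ?L \<inter> WF ?RN (K + 2) x (y - 2))"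
    proof (cases "c = 1")
      case True then show ?thesis unfolding Ld by simp
    next
      case False
      then have y2: "2 \<le> y" using y x c by auto
      have "decode x y ` shL ` Ld = decode x (y - 2) ` dat F (K + 2) lt x (y - 2)"
        unfolding Ld using False decode_shL[OF y2] by (simp add: image_image)
      then show ?thesis using False decode_dat by simp
    qed
    have y1: "1 \<le> y" using y x c by auto
    have a2: "decode x y ` shM ` sdat M = ?L \<inter> WF ?RN (K + 2) (x - 1) (y - 1)"
      unfolding sM using decode_shM[OF y1] decode_dat by (simp add: image_image)
    have a3: "decode x y ` shR ` sdat R = ?L \<inter> WF ?RN (K + 2) (x - 2) y"
      unfolding sR using decode_shR decode_dat by (simp add: image_image)
    show ?thesis unfolding Old_def image_Un a1 a2 a3 Unb_def by auto
  qed
  have OldW: "Old \<subseteq> RelWin ?RN (K + 4)"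
  proof -
    have "Ld \<subseteq> RelWin ?RN (K + 2)" unfolding Ld using dat_in_RelWin[of F "K + 2" lt x "y - 2"] by auto
    moreover have "sdat M \<subseteq> RelWin ?RN (K + 2)" "sdat R \<subseteq> RelWin ?RN (K + 2)"
      unfolding sM sR using dat_in_RelWin[of F "K + 2" lt] by auto
    ultimately show ?thesis unfolding Old_def using sh_RelWin by blast
  qed
  have Oldpos: "\<And>r. r \<in> Old \<Longrightarrow> posf (decode x y r)"
    using dOld LMC_pos by blast
  have E: "decode ?xh ?yh ` Old = mapf ?f ` (?L \<inter> ?U)"
  proof -
    have "decode ?xh ?yh ` Old = (\<lambda>r. mapf ?f (decode x y r)) ` Old"
      using dec_map(2)[OF x c y] OldW Oldpos by (intro image_cong) auto
    then show ?thesis using dOld by (simp add: image_image[symmetric])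
  qed
  define lt' where "lt' = (\<lambda>k. ls ! (?xh - k))"
  have fx: "?f x = ?xh" using decX[OF x c, of 0 K] by simp
  have LT: "\<forall>a \<le> K. lt (minus_pred x a) = lt' (minus_pred (?f x) a)"
  proof (intro allI impI)
    fix a assume a: "a \<le> K"
    have xh1: "1 \<le> ?xh" using x B unfolding xh_def by simp
    have m1: "minus_pred ?xh a = max 1 (?xh - a)" using xh1 by (simp add: mp_eq)
    define e where "e = ?xh - max 1 (?xh - a)"
    have e: "e \<le> K" "e = min a (?xh - 1)" unfolding e_def using a xh1 by auto
    have "lt' (minus_pred (?f x) a) = ls ! e" unfolding lt'_def fx m1 e_def by simp
    also have "\<dots> = lt (max 1 (x - e))" unfolding ls lets_def using e(1) by (simp del: upt_Suc)
    also have "max 1 (x - e) = minus_pred x a"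
      using e(2) x a B unfolding xh_def by (simp add: mp_eq min_def max_def)
    finally show "lt (minus_pred x a) = lt' (minus_pred (?f x) a)" by simp
  qed
  have NEW: "cl F lt' (Pset ?xh ?yh) (mapf ?f ` (?L \<inter> ?U)) = mapf ?f ` (?L \<inter> factsAt ?P)"
  proof -
    have "cl F lt' (Pset ?xh ?yh) (mapf ?f ` (?L \<inter> ?U)) = mapf ?f ` cl F lt ?P (?L \<inter> ?U)"
    proof (rule transl[where Dm = "Dm K x c"])
      show "\<And>C h v X Y M. C \<in> set F \<Longrightarrow> h \<in> set (fst C) \<Longrightarrow> (X, Y) \<in> ?P \<Longrightarrow>
          M \<subseteq> factsDom (Dm K x c) \<Longrightarrow> chyp lt v X Y M h = chyp lt' v (?f X) (?f Y) (mapf ?f ` M) h"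
        using site_equiv[OF x c y, where lt = lt and lt' = lt'] LT unfolding K_def by blast
      show "Pset ?xh ?yh = (\<lambda>(X, Y). (?f X, ?f Y)) ` ?P" using Pset_image[OF x c y] by simp
      show "\<And>X Y. (X, Y) \<in> ?P \<Longrightarrow> 1 \<le> X \<and> 1 \<le> Y \<and> 1 \<le> ?f X \<and> 1 \<le> ?f Y"
      proof -
        fix X Y assume P: "(X, Y) \<in> ?P"
        have "cOK K x c X \<and> cOK K x c Y" using Pset_coords[OF x c y P] .
        then show "1 \<le> X \<and> 1 \<le> Y \<and> 1 \<le> ?f X \<and> 1 \<le> ?f Y"
          using phi_pos[OF x c] P unfolding cOK_def Pset_def by auto
      qed
      show "factsAt ?P \<subseteq> factsDom (Dm K x c)" by (rule PsetD[OF x c y])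
      show "?L \<inter> ?U \<subseteq> factsDom (Dm K x c)" using UnbD[OF x c y] by blast
    qed
    also have "cl F lt ?P (?L \<inter> ?U) = ?L \<inter> factsAt ?P"
    proof -
      have loc: "\<And>C h v X Y g. C \<in> set F \<Longrightarrow> h \<in> set (fst C) \<Longrightarrow> (X, Y) \<in> ?P \<Longrightarrow> 1 \<le> X \<Longrightarrow> 1 \<le> Y
          \<Longrightarrow> hfact v X Y h = Some g \<Longrightarrow> g \<in> factsAt ?P \<union> ?U"
        using locality[OF x c y] unfolding K_def by blast
      show ?thesis using closure_LMC[where F = F and P = ?P and U = ?U and lt = lt, OF loc] by simp
    qed
    finally show ?thesis .
  qed
  define E' where "E' = decode ?xh ?yh ` Old"
  define NEW' where "NEW' = cl F lt' (Pset ?xh ?yh) E'"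
  have E'eq: "E' = mapf ?f ` (?L \<inter> ?U)" unfolding E'_def using E .
  have NEW'eq: "NEW' = mapf ?f ` (?L \<inter> factsAt ?P)" unfolding NEW'_def E'eq using NEW .
  have inj: "inj_on (mapf ?f) (factsDom (Dm K x c))" by (rule mapf_inj[OF inj_phi[OF x c]])
  have SD: "?L \<inter> (?U \<union> factsAt ?P) \<subseteq> factsDom (Dm K x c)" using UnbD[OF x c y] PsetD[OF x c y] by blast
  have EN: "E' \<union> NEW' = mapf ?f ` (?L \<inter> (?U \<union> factsAt ?P))" unfolding E'eq NEW'eq by blast
  define d' where "d' = {r \<in> RelWin ?RN (K + 2). decode ?xh ?yh r \<in> E' \<union> NEW'}"
  have d'eq: "d' = dat F (K + 2) lt x y"
  proof -
    have "(decode ?xh ?yh r \<in> E' \<union> NEW') = (decode x y r \<in> ?L)" if r: "r \<in> RelWin ?RN (K + 2)" for r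
    proof -
      have r4: "r \<in> RelWin ?RN (K + 4)" using r unfolding RelWin_def by auto
      show ?thesis
      proof (cases "posf (decode x y r)")
        case True
        let ?g = "decode x y r"
        have g1: "?g \<in> WF ?RN (K + 2) x y" using decode_WF[OF r True] .
        have g2: "?g \<in> factsAt ?P \<union> ?U" using coverage[OF x c y g1] .
        have g3: "?g \<in> factsDom (Dm K x c)" using g2 UnbD[OF x c y] PsetD[OF x c y] by blast
        have "decode ?xh ?yh r = mapf ?f ?g" using dec_map(2)[OF x c y r4 True] .
        then have "(decode ?xh ?yh r \<in> E' \<union> NEW') = (?g \<in> ?L \<inter> (?U \<union> factsAt ?P))"
          unfolding EN using inj SD g3 by (simp add: inj_on_image_mem_iff)
        then show ?thesis using g2 by blast
      next
        case False
        have np: "\<not> posf (decode ?xh ?yh r)" using dec_map(1)[OF x c y r4] False by simp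
        have "\<forall>g \<in> E' \<union> NEW'. posf g"
        proof
          fix g assume "g \<in> E' \<union> NEW'"
          then obtain g0 where g0: "g0 \<in> factsDom (Dm K x c)" "g = mapf ?f g0" using EN SD by blast
          obtain v h where gv: "g0 = (v, h)" by (cases g0)
          have "fst (pt h) \<in> Dm K x c" "snd (pt h) \<in> Dm K x c" using g0 gv unfolding factsDom_def by auto
          then have "1 \<le> ?f (fst (pt h))" "1 \<le> ?f (snd (pt h))" using phi_pos[OF x c] by auto
          then show "posf g" using g0(2) pt_mapf[of ?f g0] gv unfolding posf_def by simp
        qed
        then show ?thesis using np False LMC_pos by blast
      qed
    qed
    then show ?thesis unfolding d'_def dat_def by blast
  qed
  have y1: "1 \<le> y" using y x c by auto
  have rd: "\<And>v ob d1 d2. d1 \<le> K + 2 \<Longrightarrow> d2 \<le> K + 2 \<Longrightarrow>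
      ((v, RB ob d1 d2) \<in> d') = ((v, FB (fst (dpt x y ob d1 d2)) (snd (dpt x y ob d1 d2))) \<in> ?L)"
    unfolding d'eq dat_def RelWin_def by simp
  have bN: "\<And>d1 d2. d1 \<le> K + 2 \<Longrightarrow> d2 \<le> K + 2 \<Longrightarrow>
      ((VN, RB True d1 d2) \<in> d' \<or> (VN, RB False d1 d2) \<in> d') =
      ((VN, FB (x - d1) (y + 1 - d2)) \<in> ?L \<or> (VN, FB (y + 1 - d2) (x - d1)) \<in> ?L)"
    using rd by (simp add: dpt_def)
  have bX: "\<And>d1 d2. d1 \<le> K + 2 \<Longrightarrow> d2 \<le> K + 2 \<Longrightarrow>
      ((VX, RB True d1 d2) \<in> d' \<or> (VX, RB False d1 d2) \<in> d') =
      ((VX, FB (x - d1) (y + 1 - d2)) \<in> ?L \<or> (VX, FB (y + 1 - d2) (x - d1)) \<in> ?L)"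
    using rd by (simp add: dpt_def)
  have e2: "y + 1 - 2 = y - 1" "y + 1 - 1 = y" using y1 by auto
  define AN where "AN = (La \<or> sagg M \<or> sagg R \<or>
     ((VN, RB True 0 2) \<in> d' \<or> (VN, RB False 0 2) \<in> d') \<or>
     ((VN, RB True 0 1) \<in> d' \<or> (VN, RB False 0 1) \<in> d') \<or>
     ((VN, RB True 1 1) \<in> d' \<or> (VN, RB False 1 1) \<in> d'))"
  define RX where "RX = (srow R \<or> ((VX, RB True 1 1) \<in> d' \<or> (VX, RB False 1 1) \<in> d') \<or>
     ((VX, RB True 0 1) \<in> d' \<or> (VX, RB False 0 1) \<in> d'))"
  have r02: "((VN, RB True 0 2) \<in> d' \<or> (VN, RB False 0 2) \<in> d') =
      ((VN, FB x (y - 1)) \<in> ?L \<or> (VN, FB (y - 1) x) \<in> ?L)" using bN[of 0 2] e2 by simp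
  have r01: "((VN, RB True 0 1) \<in> d' \<or> (VN, RB False 0 1) \<in> d') =
      ((VN, FB x y) \<in> ?L \<or> (VN, FB y x) \<in> ?L)" using bN[of 0 1] e2 by simp
  have r11: "((VN, RB True 1 1) \<in> d' \<or> (VN, RB False 1 1) \<in> d') =
      ((VN, FB (x - 1) y) \<in> ?L \<or> (VN, FB y (x - 1)) \<in> ?L)" using bN[of 1 1] e2 by simp
  have x01: "((VX, RB True 0 1) \<in> d' \<or> (VX, RB False 0 1) \<in> d') =
      ((VX, FB x y) \<in> ?L \<or> (VX, FB y x) \<in> ?L)" using bX[of 0 1] e2 by simp
  have x11: "((VX, RB True 1 1) \<in> d' \<or> (VX, RB False 1 1) \<in> d') =
      ((VX, FB (x - 1) y) \<in> ?L \<or> (VX, FB y (x - 1)) \<in> ?L)" using bX[of 1 1] e2 by simp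
  have ANeq: "AN = aggN F lt x y"
    unfolding AN_def aggN_rec[OF x c y] La sM sR r02 r01 r11 by blast
  have RXeq: "RX = rowX F lt x y"
    unfolding RX_def rowX_rec[OF x] sR x01 x11 by blast
  have st: "stepA F cc' ls Ld La M R = Act ?xh cc' ls d' AN RX (\<not> sagg M \<and> \<not> RX)"
    unfolding stepA_def Let_def K_def[symmetric] cx yh Old_def[symmetric] lt'_def[symmetric]
      E'_def[symmetric] NEW'_def[symmetric] d'_def[symmetric] AN_def RX_def by simp
  have ex: "ExpXY F lt x c = Act (min x ?B) (min c ?B) (lets lt K x) (dat F (K + 2) lt x y) (aggN F lt x y)
      (rowX F lt x y) (\<not> aggN F lt (x - 1) (y - 1) \<and> \<not> rowX F lt x y)"
    unfolding ExpXY_def Let_def K_def y by simp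
  show ?thesis unfolding st ex d'eq ANeq RXeq sM using cc ls by (simp add: xh_def)
qed


definition step_c :: "'a horn_formula \<Rightarrow> 'a st \<Rightarrow> 'a st \<Rightarrow> 'a st \<Rightarrow> 'a st" where
  "step_c F L M R = (case L of Lam \<Rightarrow> Lam
     | Act _ ccL lsL dL aL _ _ \<Rightarrow> stepA F (min (ccL + 1) (BB (Kof F))) lsL dL aL M R)"

definition step_1 :: "'a horn_formula \<Rightarrow> 'a \<Rightarrow> 'a st \<Rightarrow> 'a st \<Rightarrow> 'a st" where
  "step_1 F s M R = stepA F 1 (s # (case M of Lam \<Rightarrow> replicate (Kof F) s | Act _ _ ls _ _ _ _ \<Rightarrow> take (Kof F) ls))
     {} False M R"

definition Exp :: "'a horn_formula \<Rightarrow> (nat \<Rightarrow> 'a) \<Rightarrow> nat \<Rightarrow> nat \<Rightarrow> 'a st" where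
  "Exp F lt c t = (if t < c then Lam else ExpXY F lt (t - c + 1) c)"

lemma lets_Suc: "lets lt K (Suc t) = lt (Suc t) # take K (lets lt K t)"
proof (rule nth_equalityI)
  show "length (lets lt K (Suc t)) = length (lt (Suc t) # take K (lets lt K t))"
    unfolding lets_def by simp
next
  fix i assume i: "i < length (lets lt K (Suc t))"
  then have iK: "i < K + 1" unfolding lets_def by simp
  show "lets lt K (Suc t) ! i = (lt (Suc t) # take K (lets lt K t)) ! i"
  proof (cases i)
    case 0 then show ?thesis unfolding lets_def by (simp del: upt_Suc)
  next
    case (Suc j)
    then have j: "j < K" using iK by simp
    have "lets lt K (Suc t) ! i = lt (max 1 (Suc t - i))" unfolding lets_def using iK by (simp del: upt_Suc)
    moreover have "(lt (Suc t) # take K (lets lt K t)) ! i = lt (max 1 (t - j))"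
      using Suc j unfolding lets_def by (simp del: upt_Suc)
    ultimately show ?thesis using Suc by simp
  qed
qed

lemma lets_0: "lets lt K 0 = replicate (K + 1) (lt 1)"
  unfolding lets_def by (simp add: map_replicate_const del: upt_Suc)

lemma step_c_Exp:
  assumes c: "2 \<le> c"
  shows "step_c F (Exp F lt (c - 1) t) (Exp F lt c t) (Exp F lt (c + 1) t) = Exp F lt c (Suc t)"
proof (cases "Suc t < c")
  case True
  then show ?thesis unfolding Exp_def step_c_def by auto
next
  case False
  define x where "x = Suc t - c + 1"
  have x: "1 \<le> x" unfolding x_def by simp
  have c1: "1 \<le> c" using c by simp
  have L: "Exp F lt (c - 1) t = ExpXY F lt x (c - 1)"
    using False c unfolding Exp_def x_def by auto
  have M: "Exp F lt c t = (if x = 1 then Lam else ExpXY F lt (x - 1) c)"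
  proof (cases "t < c")
    case True then have "x = 1" using False unfolding x_def by simp
    then show ?thesis using True unfolding Exp_def by simp
  next
    case False then have "x \<noteq> 1" "x - 1 = t - c + 1" unfolding x_def by auto
    then show ?thesis using False unfolding Exp_def by simp
  qed
  have R: "Exp F lt (c + 1) t = (if x \<le> 2 then Lam else ExpXY F lt (x - 2) (c + 1))"
  proof (cases "t < c + 1")
    case True then have "x \<le> 2" using False unfolding x_def by simp
    then show ?thesis using True unfolding Exp_def by simp
  next
    case False then have "\<not> x \<le> 2" "x - 2 = t - (c + 1) + 1" unfolding x_def by auto
    then show ?thesis using False unfolding Exp_def by simp
  qed
  have yL: "x + 2 * (c - 1) - 2 = (x + 2 * c - 2) - 2" using c by simp
  have mc: "min (Suc (min (c - Suc 0) (BB (Kof F)))) (BB (Kof F)) = min c (BB (Kof F))" using c by (auto simp: min_def)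
  have "step_c F (Exp F lt (c - 1) t) (Exp F lt c t) (Exp F lt (c + 1) t) =
        stepA F (min c (BB (Kof F))) (lets lt (Kof F) x) (dat F (Kof F + 2) lt x ((x + 2 * c - 2) - 2))
          (aggN F lt x ((x + 2 * c - 2) - 2)) (Exp F lt c t) (Exp F lt (c + 1) t)"
    unfolding L step_c_def ExpXY_def Let_def yL by (simp add: mc)
  also have "\<dots> = ExpXY F lt x c"
    by (rule stepA_correct[OF x c1 refl]) (use c M R in auto)
  also have "\<dots> = Exp F lt c (Suc t)" using False unfolding Exp_def x_def by simp
  finally show ?thesis .
qed

lemma step_1_Exp:
  shows "step_1 F (lt (Suc t)) (Exp F lt 1 t) (Exp F lt 2 t) = Exp F lt 1 (Suc t)"
proof -
  define x where "x = Suc t"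
  have x: "1 \<le> x" unfolding x_def by simp
  have M: "Exp F lt 1 t = (if x = 1 then Lam else ExpXY F lt (x - 1) 1)"
    unfolding Exp_def x_def by auto
  have R: "Exp F lt 2 t = (if x \<le> 2 then Lam else ExpXY F lt (x - 2) 2)"
  proof (cases "t < 2")
    case True then show ?thesis unfolding Exp_def x_def by simp
  next
    case False then have "x - 2 = t - 2 + 1" unfolding x_def by auto
    then show ?thesis using False unfolding Exp_def x_def by simp
  qed
  have ls: "lt (Suc t) # (case Exp F lt 1 t of Lam \<Rightarrow> replicate (Kof F) (lt (Suc t))
        | Act _ _ ls _ _ _ _ \<Rightarrow> take (Kof F) ls) = lets lt (Kof F) x"
  proof (cases t)
    case 0
    have "take (Kof F) (lets lt (Kof F) 0) = replicate (Kof F) (lt 1)"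
      by (simp add: lets_0 take_replicate del: replicate_Suc)
    then show ?thesis unfolding x_def Exp_def using lets_Suc[of lt "Kof F" 0] 0 by simp
  next
    case (Suc t') then show ?thesis unfolding x_def Exp_def ExpXY_def Let_def using lets_Suc[of lt "Kof F" t] by simp
  qed
  have B: "BB (Kof F) \<ge> 1" using BB_ge[of "Kof F"] by simp
  have "step_1 F (lt (Suc t)) (Exp F lt 1 t) (Exp F lt 2 t) =
        stepA F (min 1 (BB (Kof F))) (lets lt (Kof F) x) {} False (Exp F lt 1 t) (Exp F lt 2 t)"
    unfolding step_1_def ls using B by simp
  also have "\<dots> = ExpXY F lt x 1"
    by (rule stepA_correct[OF x _ refl]) (use M R in \<open>auto simp: numeral_2_eq_2\<close>)
  also have "\<dots> = Exp F lt 1 (Suc t)" unfolding Exp_def x_def by simp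
  finally show ?thesis .
qed


lemma UNIV_ver: "(UNIV :: ver set) = {VN, VX}"
  by (auto intro: ver.exhaust)

lemma finite_RelWin: "finite RN \<Longrightarrow> finite (RelWin RN D)"
proof -
  assume fRN: "finite RN"
  let ?A = "(\<lambda>(v, S, ob, d1, d2). (v, RR S ob d1 d2)) ` ((UNIV :: ver set) \<times> RN \<times> (UNIV :: bool set) \<times> {..D} \<times> {..D})"
  let ?B = "(\<lambda>(v, ob, d1, d2). (v, RB ob d1 d2)) ` ((UNIV :: ver set) \<times> (UNIV :: bool set) \<times> {..D} \<times> {..D})"
  have "RelWin RN D \<subseteq> ?A \<union> ?B"
  proof
    fix r assume r: "r \<in> RelWin RN D"
    obtain v h where rv: "r = (v, h)" by (cases r)
    show "r \<in> ?A \<union> ?B"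
    proof (cases h)
      case (RR S ob d1 d2)
      then have "(v, S, ob, d1, d2) \<in> (UNIV :: ver set) \<times> RN \<times> (UNIV :: bool set) \<times> {..D} \<times> {..D}"
        using r rv unfolding RelWin_def by auto
      then have "r \<in> ?A" using rv RR by (auto intro: image_eqI[where x = "(v, S, ob, d1, d2)"])
      then show ?thesis by blast
    next
      case (RB ob d1 d2)
      then have "(v, ob, d1, d2) \<in> (UNIV :: ver set) \<times> (UNIV :: bool set) \<times> {..D} \<times> {..D}"
        using r rv unfolding RelWin_def by auto
      then have "r \<in> ?B" using rv RB by (auto intro: image_eqI[where x = "(v, ob, d1, d2)"])
      then show ?thesis by blast
    qed
  qed
  moreover have "finite (?A \<union> ?B)" using fRN by (simp add: UNIV_ver)
  ultimately show ?thesis by (rule finite_subset)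
qed

definition StSpace :: "'a horn_formula \<Rightarrow> ('a::finite) st set" where
  "StSpace F = insert Lam {Act cx cc ls d a r z | cx cc ls d a r z.
     cx \<le> BB (Kof F) \<and> cc \<le> BB (Kof F) \<and> length ls = Kof F + 1 \<and> d \<subseteq> RelWin (RNof F) (Kof F + 2)}"

lemma finite_StSpace: "finite (StSpace (F :: ('a::finite) horn_formula))"
proof -
  let ?B = "BB (Kof F)"
  let ?S = "{..?B} \<times> {..?B} \<times> {ls :: 'a list. set ls \<subseteq> UNIV \<and> length ls = Kof F + 1} \<times> Pow (RelWin (RNof F) (Kof F + 2))
      \<times> (UNIV :: bool set) \<times> (UNIV :: bool set) \<times> (UNIV :: bool set)"
  have "StSpace F \<subseteq> insert Lam ((\<lambda>(cx, cc, ls, d, a, r, z). Act cx cc ls d a r z) ` ?S)"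
  proof
    fix s assume "s \<in> StSpace F"
    then consider "s = Lam" | cx cc ls d a r z where "s = Act cx cc ls d a r z" "cx \<le> ?B" "cc \<le> ?B"
        "length ls = Kof F + 1" "d \<subseteq> RelWin (RNof F) (Kof F + 2)"
      unfolding StSpace_def by blast
    then show "s \<in> insert Lam ((\<lambda>(cx, cc, ls, d, a, r, z). Act cx cc ls d a r z) ` ?S)"
    proof cases
      case 1 then show ?thesis by simp
    next
      case (2 cx cc ls d a r z)
      then have "(cx, cc, ls, d, a, r, z) \<in> ?S" by simp
      then show ?thesis using 2(1) by (auto intro: image_eqI[where x = "(cx, cc, ls, d, a, r, z)"])
    qed
  qed
  moreover have "finite ?S"
  proof (intro finite_cartesian_product)
    show "finite {ls :: 'a list. set ls \<subseteq> UNIV \<and> length ls = Kof F + 1}"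
      using finite_lists_length_eq[of "UNIV :: 'a set"] by simp
    show "finite (Pow (RelWin (RNof F) (Kof F + 2)))" using finite_RelWin[OF finite_RNof] by simp
  qed auto
  ultimately show ?thesis by (meson finite_imageI finite_insert finite_subset)
qed

lemma countable_StSpace: "countable (StSpace (F :: ('a::finite) horn_formula))"
  using finite_StSpace by (rule countable_finite)

definition code :: "('a::finite) horn_formula \<Rightarrow> 'a st \<Rightarrow> nat" where
  "code F = to_nat_on (StSpace F)"

definition decs :: "('a::finite) horn_formula \<Rightarrow> nat \<Rightarrow> 'a st" where
  "decs F p = (if p \<in> code F ` StSpace F then from_nat_into (StSpace F) p else Lam)"

definition clamp :: "('a::finite) horn_formula \<Rightarrow> 'a st \<Rightarrow> 'a st" where
  "clamp F s = (if s \<in> StSpace F then s else Lam)"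

definition IAof :: "('a::finite) horn_formula \<Rightarrow> 'a iarray" where
  "IAof F = \<lparr>Qs = code F ` StSpace F, Qacc = code F ` {s \<in> StSpace F. sacc s}, qlam = code F Lam,
     qsharp = Suc (Max (code F ` StSpace F)),
     dlt = (\<lambda>p q r. code F (clamp F (step_c F (decs F p) (decs F q) (decs F r)))),
     dlt_in = (\<lambda>s p q r. code F (clamp F (step_1 F s (decs F q) (decs F r))))\<rparr>"

lemma Lam_in: "Lam \<in> StSpace F"
  unfolding StSpace_def by simp

lemma clamp_in: "clamp F s \<in> StSpace F"
  unfolding clamp_def using Lam_in by auto

lemma decs_code: "s \<in> StSpace F \<Longrightarrow> decs F (code F s) = s"
  unfolding decs_def code_def using from_nat_into_to_nat_on[OF countable_StSpace[of F]] by auto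

lemma code_inj: "s \<in> StSpace F \<Longrightarrow> s' \<in> StSpace F \<Longrightarrow> (code F s = code F s') = (s = s')"
  unfolding code_def using inj_on_to_nat_on[OF countable_StSpace[of F]] by (meson inj_on_eq_iff)

lemma decs_out: "p \<notin> code F ` StSpace F \<Longrightarrow> decs F p = Lam"
  unfolding decs_def by simp

lemma qsharp_notin: "Suc (Max (code F ` StSpace F)) \<notin> code F ` StSpace F"
proof
  assume a: "Suc (Max (code F ` StSpace F)) \<in> code F ` StSpace F"
  have "finite (code F ` StSpace F)" using finite_StSpace[of F] by (rule finite_imageI)
  then have "Suc (Max (code F ` StSpace F)) \<le> Max (code F ` StSpace F)" using a by (rule Max_ge)
  then show False by simp
qed

lemma step_c_Lam: "step_c F Lam M R = Lam"
  unfolding step_c_def by simp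

lemma wf_IAof: "ia_wf (IAof (F :: ('a::finite) horn_formula))"
proof -
  have dl: "decs F (code F Lam) = Lam" using decs_code[OF Lam_in] .
  have ds: "decs F (Suc (Max (code F ` StSpace F))) = Lam" using decs_out[OF qsharp_notin] .
  show ?thesis
    unfolding ia_wf_def IAof_def
    using finite_StSpace[of F] qsharp_notin[of F] clamp_in[of F] Lam_in[of F] dl ds
    by (auto simp: step_c_Lam clamp_def)
qed

lemma ExpXY_in: "ExpXY F lt x c \<in> StSpace F"
  unfolding ExpXY_def StSpace_def Let_def lets_def using dat_in_RelWin[of F "Kof F + 2" lt x "x + 2 * c - 2"] by auto

lemma Exp_in: "Exp F lt c t \<in> StSpace F"
  unfolding Exp_def using ExpXY_in Lam_in by auto

lemma inv:
  fixes F :: "('a::finite) horn_formula" and w :: "'a list"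
  assumes "t \<le> length w" "1 \<le> c" "c + t \<le> length w + 1"
  shows "decs F (cfg (IAof F) w t c) = Exp F (ltw w) c t \<and>
         (c \<le> length w \<longrightarrow> cfg (IAof F) w t c = code F (Exp F (ltw w) c t))"
  using assms
proof (induction t arbitrary: c)
  case 0
  have e: "Exp F (ltw w) c 0 = Lam" using 0 unfolding Exp_def by simp
  show ?case
  proof (cases "c \<le> length w")
    case True
    then show ?thesis using 0 e decs_code[OF Lam_in] by (simp add: IAof_def)
  next
    case False
    then show ?thesis using 0 e decs_out[OF qsharp_notin] by (simp add: IAof_def)
  qed
next
  case (Suc t)
  let ?A = "IAof F" and ?lt = "ltw w"
  have cn: "c \<le> length w" using Suc.prems by simp
  have wne: "w \<noteq> []" using Suc.prems by auto
  have main: "cfg ?A w (Suc t) c = code F (Exp F ?lt c (Suc t))"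
  proof (cases "c = 1")
    case True
    have "decs F (cfg ?A w t 1) = Exp F ?lt 1 t \<and> (1 \<le> length w \<longrightarrow> cfg ?A w t 1 = code F (Exp F ?lt 1 t))"
      by (rule Suc.IH) (use Suc.prems in auto)
    then have i1: "decs F (cfg ?A w t 1) = Exp F ?lt 1 t" by (rule conjunct1)
    have "decs F (cfg ?A w t 2) = Exp F ?lt 2 t \<and> (2 \<le> length w \<longrightarrow> cfg ?A w t 2 = code F (Exp F ?lt 2 t))"
      by (rule Suc.IH) (use Suc.prems True in auto)
    then have i2: "decs F (cfg ?A w t 2) = Exp F ?lt 2 t" by (rule conjunct1)
    have wt: "w ! t = ?lt (Suc t)" unfolding ltw_def by simp
    have "cfg ?A w (Suc t) c = code F (clamp F (step_1 F (w ! t) (decs F (cfg ?A w t 1)) (decs F (cfg ?A w t 2))))"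
      using True Suc.prems wne by (simp add: IAof_def)
    also have "\<dots> = code F (clamp F (Exp F ?lt 1 (Suc t)))" unfolding i1 i2 wt step_1_Exp ..
    also have "\<dots> = code F (Exp F ?lt c (Suc t))" using True Exp_in[of F ?lt 1 "Suc t"] unfolding clamp_def by simp
    finally show ?thesis .
  next
    case False
    then have c2: "2 \<le> c" using Suc.prems by simp
    have "decs F (cfg ?A w t (c - 1)) = Exp F ?lt (c - 1) t \<and> (c - 1 \<le> length w \<longrightarrow> cfg ?A w t (c - 1) = code F (Exp F ?lt (c - 1) t))"
      by (rule Suc.IH) (use Suc.prems c2 in auto)
    then have i1: "decs F (cfg ?A w t (c - 1)) = Exp F ?lt (c - 1) t" by (rule conjunct1)
    have "decs F (cfg ?A w t c) = Exp F ?lt c t \<and> (c \<le> length w \<longrightarrow> cfg ?A w t c = code F (Exp F ?lt c t))"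
      by (rule Suc.IH) (use Suc.prems c2 in auto)
    then have i2: "decs F (cfg ?A w t c) = Exp F ?lt c t" by (rule conjunct1)
    have "decs F (cfg ?A w t (c + 1)) = Exp F ?lt (c + 1) t \<and> (c + 1 \<le> length w \<longrightarrow> cfg ?A w t (c + 1) = code F (Exp F ?lt (c + 1) t))"
      by (rule Suc.IH) (use Suc.prems c2 in auto)
    then have i3: "decs F (cfg ?A w t (c + 1)) = Exp F ?lt (c + 1) t" by (rule conjunct1)
    have "cfg ?A w (Suc t) c = code F (clamp F (step_c F (decs F (cfg ?A w t (c - 1))) (decs F (cfg ?A w t c))
             (decs F (cfg ?A w t (c + 1)))))"
      using False cn Suc.prems wne by (simp add: IAof_def)
    also have "\<dots> = code F (clamp F (Exp F ?lt c (Suc t)))" unfolding i1 i2 i3 step_c_Exp[OF c2] ..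
    also have "\<dots> = code F (Exp F ?lt c (Suc t))" using Exp_in[of F ?lt c "Suc t"] unfolding clamp_def by simp
    finally show ?thesis .
  qed
  then show ?case using decs_code[OF Exp_in] cn by simp
qed

lemma accept_iff:
  fixes F :: "('a::finite) horn_formula" and w :: "'a list"
  assumes w: "w \<noteq> []"
  shows "ia_accepts_rt (IAof F) w \<longleftrightarrow> horn_models w F"
proof -
  let ?n = "length w" and ?lt = "ltw w" and ?L = "LMC F (ltw w)"
  have n: "1 \<le> ?n" using w by (cases w) auto
  have ci: "decs F (cfg (IAof F) w ?n 1) = Exp F ?lt 1 ?n \<and> (1 \<le> ?n \<longrightarrow> cfg (IAof F) w ?n 1 = code F (Exp F ?lt 1 ?n))"
    by (rule inv) auto
  then have c: "cfg (IAof F) w ?n 1 = code F (Exp F ?lt 1 ?n)" using n by blast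
  have e: "Exp F ?lt 1 ?n = ExpXY F ?lt ?n 1" unfolding Exp_def using n w by simp
  have acc: "sacc (Exp F ?lt 1 ?n) = (\<not> aggN F ?lt (?n - 1) (?n - 1) \<and> \<not> rowX F ?lt ?n ?n)"
    unfolding e ExpXY_def Let_def by simp
  have "ia_accepts_rt (IAof F) w = sacc (Exp F ?lt 1 ?n)"
    unfolding ia_accepts_rt_def c using Exp_in[of F ?lt 1 ?n] code_inj[of _ F]
    by (auto simp: IAof_def)
  also have "\<dots> = (\<not> (\<exists>p q. 1 \<le> p \<and> p \<le> ?n \<and> 1 \<le> q \<and> q \<le> ?n \<and> (view ?n p q, FB p q) \<in> ?L))"
  proof -
    have "(aggN F ?lt (?n - 1) (?n - 1) \<or> rowX F ?lt ?n ?n) =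
          (\<exists>p q. 1 \<le> p \<and> p \<le> ?n \<and> 1 \<le> q \<and> q \<le> ?n \<and> (view ?n p q, FB p q) \<in> ?L)"
    proof
      assume "aggN F ?lt (?n - 1) (?n - 1) \<or> rowX F ?lt ?n ?n"
      then show "\<exists>p q. 1 \<le> p \<and> p \<le> ?n \<and> 1 \<le> q \<and> q \<le> ?n \<and> (view ?n p q, FB p q) \<in> ?L"
      proof
        assume "aggN F ?lt (?n - 1) (?n - 1)"
        then obtain p q where pq: "p \<le> ?n - 1" "q \<le> ?n - 1" "(VN, FB p q) \<in> ?L \<or> (VN, FB q p) \<in> ?L"
          unfolding aggN_def by blast
        then show ?thesis
        proof (elim disjE)
          assume a: "(VN, FB p q) \<in> ?L"
          then have "1 \<le> p" "1 \<le> q" using LMC_pos[OF a] by (auto simp: posf_def)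
          then show ?thesis using a pq n by (intro exI[of _ p] exI[of _ q]) (auto simp: view_def)
        next
          assume a: "(VN, FB q p) \<in> ?L"
          then have "1 \<le> p" "1 \<le> q" using LMC_pos[OF a] by (auto simp: posf_def)
          then show ?thesis using a pq n by (intro exI[of _ q] exI[of _ p]) (auto simp: view_def)
        qed
      next
        assume "rowX F ?lt ?n ?n"
        then obtain p where p: "p \<le> ?n" "(VX, FB p ?n) \<in> ?L \<or> (VX, FB ?n p) \<in> ?L"
          unfolding rowX_def by blast
        then show ?thesis
        proof (elim disjE)
          assume a: "(VX, FB p ?n) \<in> ?L"
          then have "1 \<le> p" using LMC_pos[OF a] by (auto simp: posf_def)
          then show ?thesis using a p n by (intro exI[of _ p] exI[of _ ?n]) (auto simp: view_def)
        next
          assume a: "(VX, FB ?n p) \<in> ?L"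
          then have "1 \<le> p" using LMC_pos[OF a] by (auto simp: posf_def)
          then show ?thesis using a p n by (intro exI[of _ ?n] exI[of _ p]) (auto simp: view_def)
        qed
      qed
    next
      assume "\<exists>p q. 1 \<le> p \<and> p \<le> ?n \<and> 1 \<le> q \<and> q \<le> ?n \<and> (view ?n p q, FB p q) \<in> ?L"
      then obtain p q where pq: "1 \<le> p" "p \<le> ?n" "1 \<le> q" "q \<le> ?n" "(view ?n p q, FB p q) \<in> ?L" by blast
      show "aggN F ?lt (?n - 1) (?n - 1) \<or> rowX F ?lt ?n ?n"
      proof (cases "max p q = ?n")
        case True
        then have a: "(VX, FB p q) \<in> ?L" using pq unfolding view_def by simp
        show ?thesis
        proof (cases "q = ?n")
          case True then show ?thesis using a pq unfolding rowX_def by blast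
        next
          case False then have "p = ?n" using \<open>max p q = ?n\<close> by (auto simp: max_def split: if_splits)
          then show ?thesis using a pq unfolding rowX_def by blast
        qed
      next
        case False
        then have a: "(VN, FB p q) \<in> ?L" using pq unfolding view_def by simp
        have "p \<le> ?n - 1" "q \<le> ?n - 1" using False pq by auto
        then show ?thesis using a unfolding aggN_def by blast
      qed
    qed
    then show ?thesis unfolding acc by blast
  qed
  also have "\<dots> = horn_models w F" using horn_models_iff[of w F] by simp
  finally show ?thesis .
qed

theorem dir2: "pred_dio_ESO_HORN \<subseteq> (RealTime_IA :: ('a::finite) list set set)"
proof
  fix L :: "'a list set" assume "L \<in> pred_dio_ESO_HORN"
  then obtain F :: "'a horn_formula" where L: "L = {w. w \<noteq> [] \<and> horn_models w F}"
    unfolding pred_dio_ESO_HORN_def by blast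
  have "[] \<notin> L" using L by simp
  moreover have "ia_wf (IAof F) \<and> (\<forall>w. w \<noteq> [] \<longrightarrow> (w \<in> L \<longleftrightarrow> ia_accepts_rt (IAof F) w))"
    using wf_IAof accept_iff L by auto
  ultimately show "L \<in> RealTime_IA" unfolding RealTime_IA_def by blast
qed


section \<open>Direction 1: iterative arrays to Horn formulas\<close>

lemma cfg_quiet:
  assumes wf: "ia_wf A" and c: "1 \<le> c" "c \<le> length w" and t: "t < c"
  shows "cfg A w t c = qlam A"
  using c t
proof (induction t arbitrary: c)
  case 0 then show ?case by simp
next
  case (Suc t)
  have c2: "c \<noteq> 1" using Suc.prems by simp
  have l: "cfg A w t (c - 1) = qlam A" using Suc.IH[of "c - 1"] Suc.prems by simp
  have m: "cfg A w t c = qlam A" using Suc.IH[of c] Suc.prems by simp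
  have r: "cfg A w t (c + 1) = qlam A \<or> cfg A w t (c + 1) = qsharp A"
  proof (cases "c + 1 \<le> length w")
    case True then show ?thesis using Suc.IH[of "c + 1"] Suc.prems by simp
  next
    case False then show ?thesis by (cases t) auto
  qed
  have "cfg A w (Suc t) c = dlt A (cfg A w t (c - 1)) (cfg A w t c) (cfg A w t (c + 1))"
    using Suc.prems c2 by simp
  then show ?case using l m r wf unfolding ia_wf_def by auto
qed

lemma cfg_Qs:
  assumes wf: "ia_wf A"
  shows "(1 \<le> c \<and> c \<le> length w \<longrightarrow> cfg A w t c \<in> Qs A) \<and> (\<not> (1 \<le> c \<and> c \<le> length w) \<longrightarrow> cfg A w t c = qsharp A)"
proof (induction t arbitrary: c)
  case 0 then show ?case using wf unfolding ia_wf_def by simp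
next
  case (Suc t)
  have nb: "\<And>c'. cfg A w t c' \<in> insert (qsharp A) (Qs A)" using Suc.IH by blast
  have q: "cfg A w t c \<in> Qs A" if "1 \<le> c" "c \<le> length w" for c
    using Suc.IH that by blast
  have dl: "\<And>p q r. p \<in> insert (qsharp A) (Qs A) \<Longrightarrow> q \<in> Qs A \<Longrightarrow> r \<in> insert (qsharp A) (Qs A) \<Longrightarrow> dlt A p q r \<in> Qs A"
    using wf unfolding ia_wf_def by blast
  have di: "\<And>s p q r. p \<in> insert (qsharp A) (Qs A) \<Longrightarrow> q \<in> Qs A \<Longrightarrow> r \<in> insert (qsharp A) (Qs A) \<Longrightarrow> dlt_in A s p q r \<in> Qs A"
    using wf unfolding ia_wf_def by blast
  show ?case
  proof (cases "c < 1 \<or> length w < c")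
    case True then show ?thesis by auto
  next
    case False
    then have c: "1 \<le> c" "c \<le> length w" by auto
    show ?thesis
    proof (cases "c = 1 \<and> Suc t \<le> length w")
      case True
      then have "cfg A w (Suc t) c = dlt_in A (w ! t) (cfg A w t 0) (cfg A w t 1) (cfg A w t 2)" using False by simp
      moreover have "cfg A w t 1 \<in> Qs A" using q[of 1] c by simp
      ultimately show ?thesis using di nb c by simp
    next
      case F2: False
      then have "cfg A w (Suc t) c = dlt A (cfg A w t (c - 1)) (cfg A w t c) (cfg A w t (c + 1))" using False by auto
      then show ?thesis using dl nb q[OF c] c by simp
    qed
  qed
qed

lemma cfg_in_Qs: "ia_wf A \<Longrightarrow> 1 \<le> c \<Longrightarrow> c \<le> length w \<Longrightarrow> cfg A w t c \<in> Qs A"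
  using cfg_Qs by blast

definition letters :: "('a::finite) list" where
  "letters = (SOME xs. set xs = UNIV)"

lemma set_letters: "set (letters :: ('a::finite) list) = UNIV"
  unfolding letters_def by (rule someI_ex) (rule finite_list[OF finite_UNIV])

definition qsl :: "'a iarray \<Rightarrow> nat list" where
  "qsl A = sorted_list_of_set (Qs A)"

lemma set_qsl: "ia_wf A \<Longrightarrow> set (qsl A) = Qs A"
  unfolding qsl_def ia_wf_def by simp

definition cD1 :: "'a iarray \<Rightarrow> 'a \<Rightarrow> 'a horn_clause" where
  "cD1 A s = ([HInput s 0, HUnary UMin VarX 0 True, HUnary UMax VarX 0 True], CRel (dlt_in A s (qsharp A) (qlam A) (qsharp A)))"
definition cD2 :: "'a iarray \<Rightarrow> 'a \<Rightarrow> 'a horn_clause" where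
  "cD2 A s = ([HInput s 0, HUnary UMin VarX 0 True, HUnary UMax VarX 0 False], CRel (dlt_in A s (qsharp A) (qlam A) (qlam A)))"
definition cD3 :: "'a iarray \<Rightarrow> 'a \<Rightarrow> nat \<Rightarrow> 'a horn_clause" where
  "cD3 A s p = ([HInput s 0, HUnary UMin VarX 0 False, HUnary UMin VarX 1 True, HRel p 1 1], CRel (dlt_in A s (qsharp A) p (qlam A)))"
definition cD4 :: "'a iarray \<Rightarrow> 'a \<Rightarrow> nat \<Rightarrow> nat \<Rightarrow> 'a horn_clause" where
  "cD4 A s p r = ([HInput s 0, HUnary UMin VarX 1 False, HRel p 1 1, HRel r 2 0], CRel (dlt_in A s (qsharp A) p r))"
definition cO1 :: "'a iarray \<Rightarrow> nat \<Rightarrow> 'a horn_clause" where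
  "cO1 A p = ([HUnary UMin VarY 1 False, HUnary UMin VarX 0 True, HRel p 0 2], CRel (dlt A p (qlam A) (qlam A)))"
definition cO2 :: "'a iarray \<Rightarrow> nat \<Rightarrow> nat \<Rightarrow> 'a horn_clause" where
  "cO2 A p q = ([HUnary UMin VarY 1 False, HUnary UMin VarX 0 False, HUnary UMin VarX 1 True, HRel p 0 2, HRel q 1 1], CRel (dlt A p q (qlam A)))"
definition cO3 :: "'a iarray \<Rightarrow> nat \<Rightarrow> nat \<Rightarrow> nat \<Rightarrow> 'a horn_clause" where
  "cO3 A p q r = ([HUnary UMin VarY 1 False, HUnary UMin VarX 1 False, HRel p 0 2, HRel q 1 1, HRel r 2 0], CRel (dlt A p q r))"
definition cB :: "nat \<Rightarrow> 'a horn_clause" where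
  "cB q = ([HRel q 0 0, HUnary UMax VarX 0 True, HUnary UMax VarY 0 True], CBot)"

definition HF :: "('a::finite) iarray \<Rightarrow> 'a horn_formula" where
  "HF A = [cD1 A s. s \<leftarrow> letters] @ [cD2 A s. s \<leftarrow> letters] @ [cD3 A s p. s \<leftarrow> letters, p \<leftarrow> qsl A] @
     [cD4 A s p r. s \<leftarrow> letters, p \<leftarrow> qsl A, r \<leftarrow> qsl A] @ [cO1 A p. p \<leftarrow> qsl A] @
     [cO2 A p q. p \<leftarrow> qsl A, q \<leftarrow> qsl A] @ [cO3 A p q r. p \<leftarrow> qsl A, q \<leftarrow> qsl A, r \<leftarrow> qsl A] @
     [cB q. q \<leftarrow> qsl A, q \<notin> Qacc A]"

lemma set_HF:
  fixes A :: "('a::finite) iarray"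
  assumes wf: "ia_wf A"
  shows "set (HF A) = range (cD1 A) \<union> range (cD2 A) \<union> {cD3 A s p | s p. p \<in> Qs A} \<union>
     {cD4 A s p r | s p r. p \<in> Qs A \<and> r \<in> Qs A} \<union> cO1 A ` Qs A \<union> {cO2 A p q | p q. p \<in> Qs A \<and> q \<in> Qs A} \<union>
     {cO3 A p q r | p q r. p \<in> Qs A \<and> q \<in> Qs A \<and> r \<in> Qs A} \<union> cB ` (Qs A - Qacc A)"
proof -
  have q: "set (qsl A) = Qs A" using set_qsl[OF wf] .
  have l: "set (letters :: 'a list) = UNIV" by (rule set_letters)
  have e3: "set [cD3 A s p. s \<leftarrow> letters, p \<leftarrow> qsl A] = {cD3 A s p | s p. p \<in> Qs A}"
    unfolding q l by (auto simp: q l)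
  have e4: "set [cD4 A s p r. s \<leftarrow> letters, p \<leftarrow> qsl A, r \<leftarrow> qsl A] = {cD4 A s p r | s p r. p \<in> Qs A \<and> r \<in> Qs A}"
    by (auto simp: q l)
  have e6: "set [cO2 A p q. p \<leftarrow> qsl A, q \<leftarrow> qsl A] = {cO2 A p q | p q. p \<in> Qs A \<and> q \<in> Qs A}"
    by (auto simp: q l)
  have e7: "set [cO3 A p q r. p \<leftarrow> qsl A, q \<leftarrow> qsl A, r \<leftarrow> qsl A] = {cO3 A p q r | p q r. p \<in> Qs A \<and> q \<in> Qs A \<and> r \<in> Qs A}"
    by (auto simp: q l)
  have e8: "set [cB q. q \<leftarrow> qsl A, q \<notin> Qacc A] = cB ` (Qs A - Qacc A)"
    by (auto simp: q)
  have e1: "set [cD1 A s. s \<leftarrow> letters] = range (cD1 A)" by (simp add: l)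
  have e2: "set [cD2 A s. s \<leftarrow> letters] = range (cD2 A)" by (simp add: l)
  have e5: "set [cO1 A p. p \<leftarrow> qsl A] = cO1 A ` Qs A" by (simp add: q)
  show ?thesis unfolding HF_def set_append e1 e2 e3 e4 e5 e6 e7 e8 by (simp add: Un_assoc)
qed

lemma HF_cases:
  fixes A :: "('a::finite) iarray"
  assumes wf: "ia_wf A" and "C \<in> set (HF A)"
  shows "(\<exists>s. C = cD1 A s) \<or> (\<exists>s. C = cD2 A s) \<or> (\<exists>s p. C = cD3 A s p) \<or> (\<exists>s p r. C = cD4 A s p r) \<or>
         (\<exists>p. C = cO1 A p) \<or> (\<exists>p q. C = cO2 A p q) \<or> (\<exists>p q r. C = cO3 A p q r) \<or>
         (\<exists>q. q \<notin> Qacc A \<and> C = cB q)"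
  using assms(2) unfolding set_HF[OF wf] by blast

lemma HF_mem:
  fixes A :: "('a::finite) iarray"
  assumes wf: "ia_wf A"
  shows "cD1 A s \<in> set (HF A)" "cD2 A s \<in> set (HF A)"
    "p \<in> Qs A \<Longrightarrow> cD3 A s p \<in> set (HF A)"
    "p \<in> Qs A \<Longrightarrow> r \<in> Qs A \<Longrightarrow> cD4 A s p r \<in> set (HF A)"
    "p \<in> Qs A \<Longrightarrow> cO1 A p \<in> set (HF A)"
    "p \<in> Qs A \<Longrightarrow> q \<in> Qs A \<Longrightarrow> cO2 A p q \<in> set (HF A)"
    "p \<in> Qs A \<Longrightarrow> q \<in> Qs A \<Longrightarrow> r \<in> Qs A \<Longrightarrow> cO3 A p q r \<in> set (HF A)"
    "q \<in> Qs A \<Longrightarrow> q \<notin> Qacc A \<Longrightarrow> cB q \<in> set (HF A)"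
  unfolding set_HF[OF wf] by blast+

definition site :: "nat \<Rightarrow> nat \<Rightarrow> nat \<Rightarrow> nat \<Rightarrow> nat \<Rightarrow> bool" where
  "site n X Y c t \<longleftrightarrow> 1 \<le> c \<and> c \<le> t \<and> c + t \<le> n + 1 \<and> X = t - c + 1 \<and> Y = t + c - 1"

lemma site_unique: "site n X Y c t \<Longrightarrow> site n X Y c' t' \<Longrightarrow> c = c' \<and> t = t'"
  unfolding site_def by auto

definition rho0 :: "'a iarray \<Rightarrow> 'a list \<Rightarrow> nat \<Rightarrow> nat \<Rightarrow> nat \<Rightarrow> bool" where
  "rho0 A w q X Y \<longleftrightarrow> (\<exists>c t. site (length w) X Y c t \<and> cfg A w t c = q)"

lemma rho0_site: "rho0 A w q X Y \<Longrightarrow> site (length w) X Y c t \<Longrightarrow> cfg A w t c = q"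
  unfolding rho0_def using site_unique by blast

lemma mp1: "minus_pred x 1 = (if x \<le> 1 then x else x - 1)"
  by (simp add: mp_eq)
lemma mp2: "minus_pred x 2 = (if x = 0 then 0 else max 1 (x - 2))"
  by (simp add: mp_eq)
lemma mp0: "minus_pred x 0 = x"
  by (simp add: minus_pred_def)


lemma rho0I: "site (length w) X Y c t \<Longrightarrow> cfg A w t c = q \<Longrightarrow> rho0 A w q X Y"
  unfolding rho0_def by blast

lemma rho0E: "rho0 A w q X Y \<Longrightarrow> (\<And>c t. site (length w) X Y c t \<Longrightarrow> cfg A w t c = q \<Longrightarrow> P) \<Longrightarrow> P"
  unfolding rho0_def by blast

lemma cfg_0: "cfg A w t 0 = qsharp A"
  by (cases t) auto

lemma cfg_in1: "w \<noteq> [] \<Longrightarrow> 1 \<le> t \<Longrightarrow> t \<le> length w \<Longrightarrow>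
   cfg A w t 1 = dlt_in A (w ! (t - 1)) (qsharp A) (cfg A w (t - 1) 1) (cfg A w (t - 1) 2)"
  by (cases t) (auto simp: cfg_0)

lemma cfg_c: "2 \<le> c \<Longrightarrow> c \<le> length w \<Longrightarrow> 1 \<le> t \<Longrightarrow>
   cfg A w t c = dlt A (cfg A w (t - 1) (c - 1)) (cfg A w (t - 1) c) (cfg A w (t - 1) (c + 1))"
  by (cases t) auto

lemma cfg_out: "length w < c \<Longrightarrow> cfg A w t c = qsharp A"
  by (cases t) auto

context
  fixes A :: "('a::finite) iarray" and w :: "'a list"
  assumes wf: "ia_wf A" and wne: "w \<noteq> []"
begin

abbreviation "n \<equiv> length w"

lemma n1: "1 \<le> n" using wne by (cases w) auto

lemma sound_D1: "X \<in> {1..n} \<Longrightarrow> Y \<in> {1..n} \<Longrightarrow> clause_sem w (rho0 A w) X Y (cD1 A s)"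
  unfolding clause_sem_def
proof
  assume XY: "X \<in> {1..n}" "Y \<in> {1..n}" and H: "\<forall>h\<in>set (fst (cD1 A s)). hyp_sem w (rho0 A w) X Y h"
  have h1: "hyp_sem w (rho0 A w) X Y (HInput s 0)" by (rule H[rule_format]) (simp add: cD1_def)
  have h2: "hyp_sem w (rho0 A w) X Y (HUnary UMin VarX 0 True)" by (rule H[rule_format]) (simp add: cD1_def)
  have h3: "hyp_sem w (rho0 A w) X Y (HUnary UMax VarX 0 True)" by (rule H[rule_format]) (simp add: cD1_def)
  have h: "X = Y" "X = 1" "X = n" "w ! (X - 1) = s"
    using h1 h2 h3 by (auto simp: mp0 unary_sem_def var_val_def)
  have c: "cfg A w 1 1 = dlt_in A s (qsharp A) (qlam A) (qsharp A)"
    using h wne cfg_in1[OF wne, of 1 A] cfg_out[of w 2 A 0] by (simp add: cfg_0)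
  have "rho0 A w (dlt_in A s (qsharp A) (qlam A) (qsharp A)) X Y"
    by (rule rho0I[where c = 1 and t = 1]) (use h c in \<open>auto simp: site_def\<close>)
  then show "concl_sem (rho0 A w) X Y (snd (cD1 A s))" by (simp add: cD1_def)
qed

lemma sound_D2: "X \<in> {1..n} \<Longrightarrow> Y \<in> {1..n} \<Longrightarrow> clause_sem w (rho0 A w) X Y (cD2 A s)"
  unfolding clause_sem_def
proof
  assume XY: "X \<in> {1..n}" "Y \<in> {1..n}" and H: "\<forall>h\<in>set (fst (cD2 A s)). hyp_sem w (rho0 A w) X Y h"
  have h1: "hyp_sem w (rho0 A w) X Y (HInput s 0)" by (rule H[rule_format]) (simp add: cD2_def)
  have h2: "hyp_sem w (rho0 A w) X Y (HUnary UMin VarX 0 True)" by (rule H[rule_format]) (simp add: cD2_def)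
  have h3: "hyp_sem w (rho0 A w) X Y (HUnary UMax VarX 0 False)" by (rule H[rule_format]) (simp add: cD2_def)
  have h: "X = Y" "X = 1" "X \<noteq> n" "w ! (X - 1) = s"
    using h1 h2 h3 by (auto simp: mp0 unary_sem_def var_val_def)
  have n2: "2 \<le> n" using h n1 by linarith
  have q2: "cfg A w 0 2 = qlam A" using n2 by simp
  have c: "cfg A w 1 1 = dlt_in A s (qsharp A) (qlam A) (qlam A)"
    using h wne cfg_in1[OF wne, of 1 A] q2 n2 by (simp add: cfg_0)
  have "rho0 A w (dlt_in A s (qsharp A) (qlam A) (qlam A)) X Y"
    by (rule rho0I[where c = 1 and t = 1]) (use h c n2 in \<open>auto simp: site_def\<close>)
  then show "concl_sem (rho0 A w) X Y (snd (cD2 A s))" by (simp add: cD2_def)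
qed

lemma sound_D3: "X \<in> {1..n} \<Longrightarrow> Y \<in> {1..n} \<Longrightarrow> clause_sem w (rho0 A w) X Y (cD3 A s p)"
  unfolding clause_sem_def
proof
  assume XY: "X \<in> {1..n}" "Y \<in> {1..n}" and H: "\<forall>h\<in>set (fst (cD3 A s p)). hyp_sem w (rho0 A w) X Y h"
  have h1: "hyp_sem w (rho0 A w) X Y (HInput s 0)" by (rule H[rule_format]) (simp add: cD3_def)
  have h2: "hyp_sem w (rho0 A w) X Y (HUnary UMin VarX 0 False)" by (rule H[rule_format]) (simp add: cD3_def)
  have h3: "hyp_sem w (rho0 A w) X Y (HUnary UMin VarX 1 True)" by (rule H[rule_format]) (simp add: cD3_def)
  have h4: "hyp_sem w (rho0 A w) X Y (HRel p 1 1)" by (rule H[rule_format]) (simp add: cD3_def)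
  have h: "X = Y" "X \<noteq> 1" "minus_pred X 1 = 1" "w ! (X - 1) = s" "rho0 A w p (minus_pred X 1) (minus_pred Y 1)"
    using h1 h2 h3 h4 by (auto simp: mp0 unary_sem_def var_val_def)
  have X2: "X = 2" using h XY by (auto simp: mp_eq)
  then have p: "rho0 A w p 1 1" using h(5) h(1) by (simp add: mp_eq)
  have c11: "cfg A w 1 1 = p" by (rule rho0_site[OF p]) (use n1 in \<open>auto simp: site_def\<close>)
  have n2: "2 \<le> n" using X2 XY by simp
  have q: "cfg A w 1 2 = qlam A" by (rule cfg_quiet[OF wf]) (use n2 in auto)
  have c: "cfg A w 2 1 = dlt_in A s (qsharp A) p (qlam A)"
    using cfg_in1[OF wne, of 2 A] n2 h X2 c11 q by simp
  have "rho0 A w (dlt_in A s (qsharp A) p (qlam A)) X Y"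
    by (rule rho0I[where c = 1 and t = 2]) (use h c n2 X2 in \<open>auto simp: site_def\<close>)
  then show "concl_sem (rho0 A w) X Y (snd (cD3 A s p))" by (simp add: cD3_def)
qed

lemma sound_D4: "X \<in> {1..n} \<Longrightarrow> Y \<in> {1..n} \<Longrightarrow> clause_sem w (rho0 A w) X Y (cD4 A s p r)"
  unfolding clause_sem_def
proof
  assume XY: "X \<in> {1..n}" "Y \<in> {1..n}" and H: "\<forall>h\<in>set (fst (cD4 A s p r)). hyp_sem w (rho0 A w) X Y h"
  have h1: "hyp_sem w (rho0 A w) X Y (HInput s 0)" by (rule H[rule_format]) (simp add: cD4_def)
  have h2: "hyp_sem w (rho0 A w) X Y (HUnary UMin VarX 1 False)" by (rule H[rule_format]) (simp add: cD4_def)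
  have h3: "hyp_sem w (rho0 A w) X Y (HRel p 1 1)" by (rule H[rule_format]) (simp add: cD4_def)
  have h4: "hyp_sem w (rho0 A w) X Y (HRel r 2 0)" by (rule H[rule_format]) (simp add: cD4_def)
  have h: "X = Y" "minus_pred X 1 \<noteq> 1" "w ! (X - 1) = s" "rho0 A w p (minus_pred X 1) (minus_pred Y 1)"
     "rho0 A w r (minus_pred X 2) Y"
    using h1 h2 h3 h4 by (auto simp: mp0 unary_sem_def var_val_def)
  have X3: "3 \<le> X" using h XY by (auto simp: mp_eq)
  have m1: "minus_pred X 1 = X - 1" "minus_pred X 2 = X - 2" using X3 by (simp_all add: mp_eq)
  have p: "rho0 A w p (X - 1) (X - 1)" using h(4) m1 h(1) by simp
  have r: "rho0 A w r (X - 2) X" using h(5) m1 h(1) by simp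
  have cp: "cfg A w (X - 1) 1 = p" by (rule rho0_site[OF p]) (use X3 XY in \<open>auto simp: site_def\<close>)
  have cr: "cfg A w (X - 1) 2 = r" by (rule rho0_site[OF r]) (use X3 XY in \<open>auto simp: site_def\<close>)
  have c: "cfg A w X 1 = dlt_in A s (qsharp A) p r"
    using cfg_in1[OF wne, of X A] XY h X3 cp cr by simp
  have "rho0 A w (dlt_in A s (qsharp A) p r) X Y"
    by (rule rho0I[where c = 1 and t = X]) (use h c XY X3 in \<open>auto simp: site_def\<close>)
  then show "concl_sem (rho0 A w) X Y (snd (cD4 A s p r))" by (simp add: cD4_def)
qed

lemma sound_O1: "X \<in> {1..n} \<Longrightarrow> Y \<in> {1..n} \<Longrightarrow> clause_sem w (rho0 A w) X Y (cO1 A p)"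
  unfolding clause_sem_def
proof
  assume XY: "X \<in> {1..n}" "Y \<in> {1..n}" and H: "\<forall>h\<in>set (fst (cO1 A p)). hyp_sem w (rho0 A w) X Y h"
  have h1: "hyp_sem w (rho0 A w) X Y (HUnary UMin VarY 1 False)" by (rule H[rule_format]) (simp add: cO1_def)
  have h2: "hyp_sem w (rho0 A w) X Y (HUnary UMin VarX 0 True)" by (rule H[rule_format]) (simp add: cO1_def)
  have h3: "hyp_sem w (rho0 A w) X Y (HRel p 0 2)" by (rule H[rule_format]) (simp add: cO1_def)
  have Y3: "3 \<le> Y" using h1 XY by (auto simp: mp_eq unary_sem_def var_val_def)
  have X1: "X = 1" using h2 by (auto simp: mp0 unary_sem_def var_val_def)
  have mY: "minus_pred Y 2 = Y - 2" using Y3 by (simp add: mp_eq)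
  have hp: "rho0 A w p X (Y - 2)" using h3 by (simp add: mp0 mY)
  obtain c' t' where s': "site n X (Y - 2) c' t'" and cp: "cfg A w t' c' = p" using rho0E[OF hp] by blast
  define c where "c = c' + 1"
  define t where "t = t' + 1"
  have st: "site n X Y c t" using s' XY Y3 unfolding site_def c_def t_def by auto
  have tc: "t = c" "2 \<le> c" "c + 1 \<le> n" using s' X1 XY Y3 unfolding site_def c_def t_def by auto
  have q1: "cfg A w t' c = qlam A" by (rule cfg_quiet[OF wf]) (use tc in \<open>auto simp: t_def c_def\<close>)
  have q2: "cfg A w t' (c + 1) = qlam A" by (rule cfg_quiet[OF wf]) (use tc in \<open>auto simp: t_def c_def\<close>)
  have cn: "2 \<le> c" "c \<le> n" "1 \<le> t" using st tc unfolding site_def by auto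
  have "cfg A w t c = dlt A (cfg A w (t - 1) (c - 1)) (cfg A w (t - 1) c) (cfg A w (t - 1) (c + 1))"
    by (rule cfg_c[OF cn])
  moreover have "t - 1 = t'" unfolding t_def by simp
  ultimately have "cfg A w t c = dlt A (cfg A w t' (c - 1)) (cfg A w t' c) (cfg A w t' (c + 1))" by simp
  then have "cfg A w t c = dlt A p (qlam A) (qlam A)" using cp q1 q2 unfolding c_def by simp
  then have "rho0 A w (dlt A p (qlam A) (qlam A)) X Y" using rho0I[OF st] by blast
  then show "concl_sem (rho0 A w) X Y (snd (cO1 A p))" by (simp add: cO1_def)
qed

lemma sound_O2: "X \<in> {1..n} \<Longrightarrow> Y \<in> {1..n} \<Longrightarrow> clause_sem w (rho0 A w) X Y (cO2 A p q)"
  unfolding clause_sem_def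
proof
  assume XY: "X \<in> {1..n}" "Y \<in> {1..n}" and H: "\<forall>h\<in>set (fst (cO2 A p q)). hyp_sem w (rho0 A w) X Y h"
  have h1: "hyp_sem w (rho0 A w) X Y (HUnary UMin VarY 1 False)" by (rule H[rule_format]) (simp add: cO2_def)
  have h2: "hyp_sem w (rho0 A w) X Y (HUnary UMin VarX 0 False)" by (rule H[rule_format]) (simp add: cO2_def)
  have h3: "hyp_sem w (rho0 A w) X Y (HUnary UMin VarX 1 True)" by (rule H[rule_format]) (simp add: cO2_def)
  have h4: "hyp_sem w (rho0 A w) X Y (HRel p 0 2)" by (rule H[rule_format]) (simp add: cO2_def)
  have h5: "hyp_sem w (rho0 A w) X Y (HRel q 1 1)" by (rule H[rule_format]) (simp add: cO2_def)
  have Y3: "3 \<le> Y" using h1 XY by (auto simp: mp_eq unary_sem_def var_val_def)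
  have X2: "X = 2" using h2 h3 XY by (auto simp: mp_eq unary_sem_def var_val_def)
  have mY: "minus_pred Y 2 = Y - 2" using Y3 by (simp add: mp_eq)
  have hp: "rho0 A w p X (Y - 2)" using h4 by (simp add: mp0 mY)
  have hq: "rho0 A w q 1 (Y - 1)" using h5 Y3 X2 by (simp add: mp_eq)
  obtain c' t' where s': "site n X (Y - 2) c' t'" and cp: "cfg A w t' c' = p" using rho0E[OF hp] by blast
  define c where "c = c' + 1"
  define t where "t = t' + 1"
  have st: "site n X Y c t" using s' XY Y3 unfolding site_def c_def t_def by auto
  have tc: "t' = c" "2 \<le> c" "c + 1 \<le> n" using s' X2 XY Y3 unfolding site_def c_def t_def by auto
  have sq: "site n 1 (Y - 1) c t'" using s' X2 XY Y3 tc unfolding site_def c_def by auto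
  have cq: "cfg A w t' c = q" by (rule rho0_site[OF hq sq])
  have q2: "cfg A w t' (c + 1) = qlam A" by (rule cfg_quiet[OF wf]) (use tc in auto)
  have cn: "2 \<le> c" "c \<le> n" "1 \<le> t" using st tc unfolding site_def by auto
  have "cfg A w t c = dlt A (cfg A w (t - 1) (c - 1)) (cfg A w (t - 1) c) (cfg A w (t - 1) (c + 1))"
    by (rule cfg_c[OF cn])
  moreover have "t - 1 = t'" unfolding t_def by simp
  ultimately have "cfg A w t c = dlt A (cfg A w t' (c - 1)) (cfg A w t' c) (cfg A w t' (c + 1))" by simp
  then have "cfg A w t c = dlt A p q (qlam A)" using cp cq q2 unfolding c_def by simp
  then have "rho0 A w (dlt A p q (qlam A)) X Y" using rho0I[OF st] by blast
  then show "concl_sem (rho0 A w) X Y (snd (cO2 A p q))" by (simp add: cO2_def)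
qed

lemma sound_O3: "X \<in> {1..n} \<Longrightarrow> Y \<in> {1..n} \<Longrightarrow> clause_sem w (rho0 A w) X Y (cO3 A p q r)"
  unfolding clause_sem_def
proof
  assume XY: "X \<in> {1..n}" "Y \<in> {1..n}" and H: "\<forall>h\<in>set (fst (cO3 A p q r)). hyp_sem w (rho0 A w) X Y h"
  have h1: "hyp_sem w (rho0 A w) X Y (HUnary UMin VarY 1 False)" by (rule H[rule_format]) (simp add: cO3_def)
  have h2: "hyp_sem w (rho0 A w) X Y (HUnary UMin VarX 1 False)" by (rule H[rule_format]) (simp add: cO3_def)
  have h4: "hyp_sem w (rho0 A w) X Y (HRel p 0 2)" by (rule H[rule_format]) (simp add: cO3_def)
  have h5: "hyp_sem w (rho0 A w) X Y (HRel q 1 1)" by (rule H[rule_format]) (simp add: cO3_def)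
  have h6: "hyp_sem w (rho0 A w) X Y (HRel r 2 0)" by (rule H[rule_format]) (simp add: cO3_def)
  have Y3: "3 \<le> Y" using h1 XY by (auto simp: mp_eq unary_sem_def var_val_def)
  have X3: "3 \<le> X" using h2 XY by (auto simp: mp_eq unary_sem_def var_val_def)
  have mY: "minus_pred Y 2 = Y - 2" using Y3 by (simp add: mp_eq)
  have hp: "rho0 A w p X (Y - 2)" using h4 by (simp add: mp0 mY)
  have hq: "rho0 A w q (X - 1) (Y - 1)" using h5 Y3 X3 by (simp add: mp_eq)
  have mX: "minus_pred X 2 = X - 2" using X3 by (simp add: mp_eq)
  have hr: "rho0 A w r (X - 2) Y" using h6 by (simp add: mp0 mX)
  obtain c' t' where s': "site n X (Y - 2) c' t'" and cp: "cfg A w t' c' = p" using rho0E[OF hp] by blast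
  define c where "c = c' + 1"
  define t where "t = t' + 1"
  have st: "site n X Y c t" using s' XY Y3 unfolding site_def c_def t_def by auto
  have tc: "2 \<le> c" "c \<le> n" using s' XY Y3 unfolding site_def c_def by auto
  have sq: "site n (X - 1) (Y - 1) c t'" using s' X3 XY Y3 unfolding site_def c_def by auto
  have sr: "site n (X - 2) Y (c + 1) t'" using s' X3 XY Y3 unfolding site_def c_def by auto
  have cq: "cfg A w t' c = q" by (rule rho0_site[OF hq sq])
  have cr: "cfg A w t' (c + 1) = r" by (rule rho0_site[OF hr sr])
  have cn: "2 \<le> c" "c \<le> n" "1 \<le> t" using st tc unfolding site_def by auto
  have "cfg A w t c = dlt A (cfg A w (t - 1) (c - 1)) (cfg A w (t - 1) c) (cfg A w (t - 1) (c + 1))"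
    by (rule cfg_c[OF cn])
  moreover have "t - 1 = t'" unfolding t_def by simp
  ultimately have "cfg A w t c = dlt A (cfg A w t' (c - 1)) (cfg A w t' c) (cfg A w t' (c + 1))" by simp
  then have "cfg A w t c = dlt A p q r" using cp cq cr unfolding c_def by simp
  then have "rho0 A w (dlt A p q r) X Y" using rho0I[OF st] by blast
  then show "concl_sem (rho0 A w) X Y (snd (cO3 A p q r))" by (simp add: cO3_def)
qed

lemma sound_B:
  assumes acc: "cfg A w n 1 \<in> Qacc A" and nq: "q \<notin> Qacc A"
  shows "X \<in> {1..n} \<Longrightarrow> Y \<in> {1..n} \<Longrightarrow> clause_sem w (rho0 A w) X Y (cB q)"
  unfolding clause_sem_def
proof
  assume XY: "X \<in> {1..n}" "Y \<in> {1..n}" and H: "\<forall>h\<in>set (fst (cB q)). hyp_sem w (rho0 A w) X Y h"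
  have h1: "hyp_sem w (rho0 A w) X Y (HRel q 0 0)" by (rule H[rule_format]) (simp add: cB_def)
  have h2: "hyp_sem w (rho0 A w) X Y (HUnary UMax VarX 0 True)" by (rule H[rule_format]) (simp add: cB_def)
  have h3: "hyp_sem w (rho0 A w) X Y (HUnary UMax VarY 0 True)" by (rule H[rule_format]) (simp add: cB_def)
  have e: "X = n" "Y = n" using h2 h3 by (auto simp: mp0 unary_sem_def var_val_def)
  have hq: "rho0 A w q n n" using h1 e by (simp add: mp0)
  have "site n n n 1 n" using n1 unfolding site_def by auto
  then have "cfg A w n 1 = q" by (rule rho0_site[OF hq])
  then show "concl_sem (rho0 A w) X Y (snd (cB q))" using acc nq by simp
qed

lemma soundness:
  assumes acc: "cfg A w n 1 \<in> Qacc A"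
  shows "horn_models w (HF A)"
  unfolding horn_models_def
proof (intro exI ballI)
  fix X Y C assume X: "X \<in> {1..n}" and Y: "Y \<in> {1..n}" and C: "C \<in> set (HF A)"
  from HF_cases[OF wf C] show "clause_sem w (rho0 A w) X Y C"
    using sound_D1[OF X Y] sound_D2[OF X Y] sound_D3[OF X Y] sound_D4[OF X Y]
      sound_O1[OF X Y] sound_O2[OF X Y] sound_O3[OF X Y] sound_B[OF acc _ X Y] by blast
qed

end


declare cfg.simps(2)[simp del]

context
  fixes A :: "('a::finite) iarray" and w :: "'a list" and \<rho> :: "nat \<Rightarrow> nat \<Rightarrow> nat \<Rightarrow> bool"
  assumes wf: "ia_wf A" and wne: "w \<noteq> []"
    and M: "\<forall>X\<in>{1..length w}. \<forall>Y\<in>{1..length w}. \<forall>C\<in>set (HF A). clause_sem w \<rho> X Y C"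
begin

abbreviation "nn \<equiv> length w"

lemma nn1: "1 \<le> nn" using wne by (cases w) auto

lemma use_clause:
  "C \<in> set (HF A) \<Longrightarrow> 1 \<le> X \<Longrightarrow> X \<le> nn \<Longrightarrow> 1 \<le> Y \<Longrightarrow> Y \<le> nn \<Longrightarrow>
   (\<forall>h\<in>set (fst C). hyp_sem w \<rho> X Y h) \<Longrightarrow> concl_sem \<rho> X Y (snd C)"
  using M unfolding clause_sem_def by auto

lemma Qs_cfg: "1 \<le> c \<Longrightarrow> c \<le> nn \<Longrightarrow> cfg A w t c \<in> Qs A"
  using cfg_in_Qs[OF wf] by blast

lemma Qs_cfg1: "cfg A w t 1 \<in> Qs A" using Qs_cfg nn1 by blast

lemma completeness:
  "1 \<le> c \<Longrightarrow> c \<le> t \<Longrightarrow> c + t \<le> nn + 1 \<Longrightarrow> \<rho> (cfg A w t c) (t - c + 1) (t + c - 1)"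
proof (induction t arbitrary: c rule: less_induct)
  case (less t)
  have t1: "1 \<le> t" using less.prems by simp
  have tn: "t \<le> nn" using less.prems by simp
  show ?case
  proof (cases "c = 1")
    case True
    have e: "t - c + 1 = t" "t + c - 1 = t" using True t1 by auto
    consider "t = 1" | "t = 2" | "3 \<le> t" using t1 by linarith
    then show ?thesis
    proof cases
      case 1
      show ?thesis
      proof (cases "nn = 1")
        case True
        have "concl_sem \<rho> 1 1 (snd (cD1 A (w ! 0)))"
          by (rule use_clause[OF HF_mem(1)[OF wf]]) (use True in \<open>auto simp: cD1_def mp0 unary_sem_def var_val_def\<close>)
        moreover have "cfg A w 1 1 = dlt_in A (w ! 0) (qsharp A) (qlam A) (qsharp A)"
          using cfg_in1[OF wne, of 1 A] True by simp
        ultimately show ?thesis unfolding e using 1 \<open>c = 1\<close> by (simp add: cD1_def)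
      next
        case False
        then have n2: "2 \<le> nn" using nn1 by simp
        have "concl_sem \<rho> 1 1 (snd (cD2 A (w ! 0)))"
          by (rule use_clause[OF HF_mem(2)[OF wf]]) (use False nn1 in \<open>auto simp: cD2_def mp0 unary_sem_def var_val_def\<close>)
        moreover have "cfg A w 1 1 = dlt_in A (w ! 0) (qsharp A) (qlam A) (qlam A)"
          using cfg_in1[OF wne, of 1 A] n2 by simp
        ultimately show ?thesis unfolding e using 1 \<open>c = 1\<close> by (simp add: cD2_def)
      qed
    next
      case 2
      let ?p = "cfg A w 1 1"
      have ih0: "\<rho> ?p (1 - 1 + 1) (1 + 1 - 1)" by (rule less.IH) (use 2 tn in auto)
      have ih: "\<rho> ?p 1 1" using ih0 by simp
      have pQ: "?p \<in> Qs A" by (rule Qs_cfg1)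
      have "concl_sem \<rho> 2 2 (snd (cD3 A (w ! 1) ?p))"
        by (rule use_clause[OF HF_mem(3)[OF wf pQ]]) (use 2 tn ih in \<open>auto simp: cD3_def mp_eq unary_sem_def var_val_def\<close>)
      moreover have "cfg A w 2 1 = dlt_in A (w ! 1) (qsharp A) ?p (qlam A)"
        using cfg_in1[OF wne, of 2 A] 2 tn cfg_quiet[OF wf, of 2 w 1] by simp
      ultimately show ?thesis unfolding e using 2 \<open>c = 1\<close> by (simp add: cD3_def)
    next
      case 3
      let ?p = "cfg A w (t - 1) 1" and ?r = "cfg A w (t - 1) 2"
      have ih10: "\<rho> ?p ((t - 1) - 1 + 1) ((t - 1) + 1 - 1)" by (rule less.IH) (use 3 tn in auto)
      have ih20: "\<rho> ?r ((t - 1) - 2 + 1) ((t - 1) + 2 - 1)" by (rule less.IH) (use 3 tn in auto)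
      have ee4: "(t - 1) - 1 + 1 = t - 1" "(t - 1) + 1 - 1 = t - 1" "(t - 1) - 2 + 1 = t - 2" "(t - 1) + 2 - 1 = t"
        using 3 by auto
      have ih1: "\<rho> ?p (t - 1) (t - 1)" using ih10 unfolding ee4 .
      have ih2: "\<rho> ?r (t - 2) t" using ih20 unfolding ee4 .
      have pQ: "?p \<in> Qs A" "?r \<in> Qs A" using Qs_cfg1 Qs_cfg[of 2 "t - 1"] 3 tn by auto
      have m: "minus_pred t 1 = t - 1" "minus_pred t 2 = t - 2" "minus_pred t 0 = t" using 3 by (simp_all add: mp_eq mp0)
      have "concl_sem \<rho> t t (snd (cD4 A (w ! (t - 1)) ?p ?r))"
        by (rule use_clause[OF HF_mem(4)[OF wf pQ]]) (use 3 tn ih1 ih2 m in \<open>auto simp: cD4_def unary_sem_def var_val_def\<close>)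
      moreover have "cfg A w t 1 = dlt_in A (w ! (t - 1)) (qsharp A) ?p ?r"
        using cfg_in1[OF wne, of t A] 3 tn by simp
      ultimately show ?thesis unfolding e using \<open>c = 1\<close> by (simp add: cD4_def)
    qed
  next
    case False
    then have c2: "2 \<le> c" using less.prems by simp
    define X where "X = t - c + 1"
    define Y where "Y = t + c - 1"
    have cn: "c \<le> nn" "c + 1 \<le> nn \<or> t = 1" using less.prems c2 by auto
    have XY: "1 \<le> X" "X \<le> nn" "3 \<le> Y" "Y \<le> nn" using less.prems c2 unfolding X_def Y_def by auto
    let ?p = "cfg A w (t - 1) (c - 1)"
    have ihp0: "\<rho> ?p ((t - 1) - (c - 1) + 1) ((t - 1) + (c - 1) - 1)"
      by (rule less.IH) (use less.prems c2 in auto)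
    have ee: "(t - 1) - (c - 1) + 1 = X" "(t - 1) + (c - 1) - 1 = Y - 2" using less.prems c2 unfolding X_def Y_def by auto
    have ihp: "\<rho> ?p X (Y - 2)" using ihp0 unfolding ee .
    have pQ: "?p \<in> Qs A" by (rule Qs_cfg) (use c2 cn in auto)
    have cfgt: "cfg A w t c = dlt A ?p (cfg A w (t - 1) c) (cfg A w (t - 1) (c + 1))"
      using cfg_c[of c w t A] c2 cn less.prems by simp
    have mY: "minus_pred Y 1 = Y - 1" "minus_pred Y 2 = Y - 2" "minus_pred Y 0 = Y" using XY by (simp_all add: mp_eq mp0)
    consider "X = 1" | "X = 2" | "3 \<le> X" using XY by linarith
    then show ?thesis
    proof cases
      case 1
      then have tc: "t = c" unfolding X_def using less.prems by simp
      have c1n: "c + 1 \<le> nn" using less.prems tc c2 by simp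
      have q1: "cfg A w (t - 1) c = qlam A" by (rule cfg_quiet[OF wf]) (use tc c2 cn in auto)
      have q2: "cfg A w (t - 1) (c + 1) = qlam A" by (rule cfg_quiet[OF wf]) (use tc c2 c1n in auto)
      have "concl_sem \<rho> X Y (snd (cO1 A ?p))"
        by (rule use_clause[OF HF_mem(5)[OF wf pQ]]) (use 1 XY ihp mY in \<open>auto simp: cO1_def unary_sem_def var_val_def mp0\<close>)
      then show ?thesis using cfgt q1 q2 unfolding X_def[symmetric] Y_def[symmetric] by (simp add: cO1_def)
    next
      case 2
      then have tc: "t = c + 1" unfolding X_def using less.prems by simp
      have c1n: "c + 1 \<le> nn" using less.prems tc c2 by simp
      let ?q = "cfg A w (t - 1) c"
      have ihq0: "\<rho> ?q ((t - 1) - c + 1) ((t - 1) + c - 1)" by (rule less.IH) (use less.prems c2 tc in auto)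
      have ee2: "(t - 1) - c + 1 = 1" "(t - 1) + c - 1 = Y - 1" using tc c2 unfolding Y_def by auto
      have ihq: "\<rho> ?q 1 (Y - 1)" using ihq0 unfolding ee2 .
      have qQ: "?q \<in> Qs A" by (rule Qs_cfg) (use c2 cn in auto)
      have q2: "cfg A w (t - 1) (c + 1) = qlam A" by (rule cfg_quiet[OF wf]) (use tc c2 c1n in auto)
      have m2: "minus_pred 2 1 = 1" "minus_pred 2 0 = 2" by (simp_all add: mp_eq mp0)
      have "concl_sem \<rho> X Y (snd (cO2 A ?p ?q))"
        by (rule use_clause[OF HF_mem(6)[OF wf pQ qQ]]) (use 2 XY ihp ihq mY m2 in \<open>auto simp: cO2_def unary_sem_def var_val_def\<close>)
      then show ?thesis using cfgt q2 unfolding X_def[symmetric] Y_def[symmetric] by (simp add: cO2_def)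
    next
      case 3
      let ?q = "cfg A w (t - 1) c" and ?r = "cfg A w (t - 1) (c + 1)"
      have tc: "c + 2 \<le> t" using 3 less.prems unfolding X_def by simp
      have ihq0: "\<rho> ?q ((t - 1) - c + 1) ((t - 1) + c - 1)" by (rule less.IH) (use less.prems c2 tc in auto)
      have ihr0: "\<rho> ?r ((t - 1) - (c + 1) + 1) ((t - 1) + (c + 1) - 1)" by (rule less.IH) (use less.prems c2 tc in auto)
      have ee3: "(t - 1) - c + 1 = X - 1" "(t - 1) + c - 1 = Y - 1" "(t - 1) - (c + 1) + 1 = X - 2" "(t - 1) + (c + 1) - 1 = Y"
        using tc c2 unfolding X_def Y_def by auto
      have ihq: "\<rho> ?q (X - 1) (Y - 1)" using ihq0 unfolding ee3 .
      have ihr: "\<rho> ?r (X - 2) Y" using ihr0 unfolding ee3 .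
      have c1n: "c + 1 \<le> nn" using less.prems tc by simp
      have qQ: "?q \<in> Qs A" "?r \<in> Qs A" by (rule Qs_cfg; use c2 cn c1n in auto)+
      have mX: "minus_pred X 1 = X - 1" "minus_pred X 2 = X - 2" "minus_pred X 0 = X" using 3 by (simp_all add: mp_eq mp0)
      have "concl_sem \<rho> X Y (snd (cO3 A ?p ?q ?r))"
        by (rule use_clause[OF HF_mem(7)[OF wf pQ qQ]]) (use 3 XY ihp ihq ihr mY mX in \<open>auto simp: cO3_def unary_sem_def var_val_def\<close>)
      then show ?thesis using cfgt unfolding X_def[symmetric] Y_def[symmetric] by (simp add: cO3_def)
    qed
  qed
qed

lemma completeness_acc: "cfg A w nn 1 \<in> Qacc A"
proof (rule ccontr)
  assume na: "cfg A w nn 1 \<notin> Qacc A"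
  have "\<rho> (cfg A w nn 1) (nn - 1 + 1) (nn + 1 - 1)" using completeness[of 1 nn] nn1 by simp
  moreover have "nn - 1 + 1 = nn" "nn + 1 - 1 = nn" using nn1 by auto
  ultimately have r: "\<rho> (cfg A w nn 1) nn nn" by simp
  have q: "cfg A w nn 1 \<in> Qs A" by (rule Qs_cfg1)
  have "concl_sem \<rho> nn nn (snd (cB (cfg A w nn 1) :: 'a horn_clause))"
    by (rule use_clause[OF HF_mem(8)[OF wf q na]]) (use r nn1 in \<open>auto simp: cB_def unary_sem_def var_val_def mp0\<close>)
  then show False by (simp add: cB_def)
qed

end

lemma horn_iff_acc:
  fixes A :: "('a::finite) iarray"
  assumes wf: "ia_wf A" and wne: "w \<noteq> []"
  shows "horn_models w (HF A) \<longleftrightarrow> ia_accepts_rt A w"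
proof
  assume "horn_models w (HF A)"
  then obtain \<rho> where "\<forall>X\<in>{1..length w}. \<forall>Y\<in>{1..length w}. \<forall>C\<in>set (HF A). clause_sem w \<rho> X Y C"
    unfolding horn_models_def by blast
  then show "ia_accepts_rt A w" using completeness_acc[OF wf wne] unfolding ia_accepts_rt_def by blast
next
  assume "ia_accepts_rt A w"
  then show "horn_models w (HF A)" using soundness[OF wf wne] unfolding ia_accepts_rt_def by blast
qed

theorem dir1: "(RealTime_IA :: ('a::finite) list set set) \<subseteq> pred_dio_ESO_HORN"
proof
  fix L :: "'a list set" assume "L \<in> RealTime_IA"
  then obtain A :: "'a iarray" where e: "[] \<notin> L" "ia_wf A" "\<forall>w. w \<noteq> [] \<longrightarrow> (w \<in> L \<longleftrightarrow> ia_accepts_rt A w)"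
    unfolding RealTime_IA_def by blast
  have "L = {w. w \<noteq> [] \<and> horn_models w (HF A)}"
  proof (rule set_eqI)
    fix w :: "'a list"
    show "w \<in> L \<longleftrightarrow> w \<in> {w. w \<noteq> [] \<and> horn_models w (HF A)}"
    proof (cases "w = []")
      case True then show ?thesis using e(1) by simp
    next
      case False
      then have "w \<in> L \<longleftrightarrow> ia_accepts_rt A w" using e(3) by blast
      also have "\<dots> \<longleftrightarrow> horn_models w (HF A)" using horn_iff_acc[OF e(2) False] by simp
      finally show ?thesis using False by simp
    qed
  qed
  then show "L \<in> pred_dio_ESO_HORN" unfolding pred_dio_ESO_HORN_def by blast
qed


theorem theorem2:
  shows "(RealTime_IA :: ('a::finite) list set set) = pred_dio_ESO_HORN"
  using dir1 dir2 by (rule equalityI)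

end
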